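(* Let $G$ be a locally compact group with left Haar measure, let $\pi$ be an irreducible strongly continuous unitary representation of $G$ on a separable Hilbert space $\mathcal{S}$ admitting at least one window, let $K$ be its Duflo–Moore operator, $\mathcal{W}$ the window space and $\mathcal{W}\otimes\mathcal{S}$ the window-signal space (as in the context). Define $V$ on the linear span $[(\mathcal{W}\cap\mathcal{S})\otimes\mathcal{S}]_0$ of the simple vectors $f\otimes s$ with $f\in\mathcal{W}\cap\mathcal{S}$, $s\in\mathcal{S}$, by $V\big(\sum_j f_j\otimes s_j\big)=\sum_j V_{f_j}[s_j]$. Then $V$ is well defined and isometric on this dense subspace, and its unique continuous extension $V:\mathcal{W}\otimes\mathcal{S}\to L^2(G)$ (the wavelet-Plancherel transform) is an isometric isomorphism between $\mathcal{W}\otimes\mathcal{S}$ and $V(\mathcal{W}\otimes\mathcal{S})\subset L^2(G)$.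
   Context: A vector $f\in\mathcal{S}$ is a window if $g\mapsto\langle f,\pi(g)f\rangle$ lies in $L^2(G)$ (left Haar measure). For a window $f$ the wavelet transform is $V_f[s](g)=\langle s,\pi(g)f\rangle$. The Duflo–Moore operator $K$ is the (up to scalar unique) densely defined positive self-adjoint operator on $\mathcal{S}$ with densely defined inverse whose domain $\mathcal{D}(K)$ is the set of windows and such that $\langle V_{f_1}[s_1],V_{f_2}[s_2]\rangle_{L^2(G)}=\langle s_1,s_2\rangle_{\mathcal{S}}\langle Kf_2,Kf_1\rangle_{\mathcal{S}}$ for all windows $f_1,f_2$ and $s_1,s_2\in\mathcal{S}$. The window space $\mathcal{W}$ is the Hilbert space completion of $\mathcal{D}(K)$ with respect to $\langle f_1,f_2\rangle_{\mathcal{W}}=\langle Kf_1,Kf_2\rangle_{\mathcal{S}}$; thus $\mathcal{W}\cap\mathcal{S}=\mathcal{D}(K)$. The tensor product $\mathcal{W}\otimes\mathcal{S}$ is built from orthonormal bases $\{\phi_n\}$ of $\mathcal{W}$ and $\{\eta_m\}$ of $\mathcal{S}$ as the Hilbert space with orthonormal basis $\{\phi_n\otimes\eta_m\}$, and for $f=\sum c_n\phi_n$, $s=\sum d_m\eta_m$ one sets $f\otimes s=\sum_{n,m}\overline{c_n}d_m\,\phi_n\otimes\eta_m$ (conjugate-linear in the first factor), so that $\langle f_1\otimes s_1,f_2\otimes s_2\rangle=\overline{\langle f_1,f_2\rangle_{\mathcal{W}}}\langle s_1,s_2\rangle_{\mathcal{S}}$. *)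

theory Defs
  imports "HOL-Analysis.Analysis"
begin

text \<open>Inner products are linear in the first and conjugate-linear in the second argument.\<close>

definition complex_inner_space ::
  "(complex \<Rightarrow> 'a::ab_group_add \<Rightarrow> 'a) \<Rightarrow> ('a \<Rightarrow> 'a \<Rightarrow> complex) \<Rightarrow> bool" where
  "complex_inner_space sc ip \<longleftrightarrow>
     vector_space sc \<and>
     (\<forall>x y z. ip (x + y) z = ip x z + ip y z) \<and>
     (\<forall>c x y. ip (sc c x) y = c * ip x y) \<and>
     (\<forall>x y. ip y x = cnj (ip x y)) \<and>
     (\<forall>x. 0 \<le> Re (ip x x)) \<and>
     (\<forall>x. ip x x = 0 \<longrightarrow> x = 0)"

definition hnorm :: "('a \<Rightarrow> 'a \<Rightarrow> complex) \<Rightarrow> 'a \<Rightarrow> real" where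
  "hnorm ip x = sqrt (Re (ip x x))"

definition hcomplete :: "('a::ab_group_add \<Rightarrow> 'a \<Rightarrow> complex) \<Rightarrow> bool" where
  "hcomplete ip \<longleftrightarrow>
     (\<forall>X :: nat \<Rightarrow> 'a.
        (\<forall>e>0. \<exists>N. \<forall>m\<ge>N. \<forall>n\<ge>N. hnorm ip (X m - X n) < e) \<longrightarrow>
        (\<exists>L. (\<lambda>n. hnorm ip (X n - L)) \<longlonglongrightarrow> 0))"

definition hilbert_space ::
  "(complex \<Rightarrow> 'a::ab_group_add \<Rightarrow> 'a) \<Rightarrow> ('a \<Rightarrow> 'a \<Rightarrow> complex) \<Rightarrow> bool" where
  "hilbert_space sc ip \<longleftrightarrow> complex_inner_space sc ip \<and> hcomplete ip"

definition hdense :: "('a::ab_group_add \<Rightarrow> 'a \<Rightarrow> complex) \<Rightarrow> 'a set \<Rightarrow> bool" where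
  "hdense ip A \<longleftrightarrow> (\<forall>x e. e > 0 \<longrightarrow> (\<exists>y\<in>A. hnorm ip (x - y) < e))"

definition hseparable :: "('a::ab_group_add \<Rightarrow> 'a \<Rightarrow> complex) \<Rightarrow> bool" where
  "hseparable ip \<longleftrightarrow> (\<exists>C. countable C \<and> hdense ip C)"

definition hclosed :: "('a::ab_group_add \<Rightarrow> 'a \<Rightarrow> complex) \<Rightarrow> 'a set \<Rightarrow> bool" where
  "hclosed ip A \<longleftrightarrow>
     (\<forall>X x. range X \<subseteq> A \<and> (\<lambda>n. hnorm ip (X n - x)) \<longlonglongrightarrow> 0 \<longrightarrow> x \<in> A)"

definition lin_subspace :: "(complex \<Rightarrow> 'a::ab_group_add \<Rightarrow> 'a) \<Rightarrow> 'a set \<Rightarrow> bool" where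
  "lin_subspace sc A \<longleftrightarrow>
     0 \<in> A \<and> (\<forall>x\<in>A. \<forall>y\<in>A. x + y \<in> A) \<and> (\<forall>c. \<forall>x\<in>A. sc c x \<in> A)"

definition locally_compact_group :: "'g::{topological_group_add, t2_space} itself \<Rightarrow> bool" where
  "locally_compact_group _ \<longleftrightarrow> locally_compact_space (euclidean :: 'g topology)"

text \<open>The group operation is written additively.\<close>

definition left_haar :: "'g::{topological_group_add, t2_space} measure \<Rightarrow> bool" where
  "left_haar \<mu> \<longleftrightarrow>
     sets \<mu> = sets borel \<and>
     (\<forall>g A. A \<in> sets borel \<longrightarrow> emeasure \<mu> ((\<lambda>x. g + x) ` A) = emeasure \<mu> A) \<and>
     (\<forall>K. compact K \<longrightarrow> emeasure \<mu> K < \<infinity>) \<and>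
     (\<forall>U. open U \<and> U \<noteq> {} \<longrightarrow> emeasure \<mu> U > 0) \<and>
     (\<forall>A \<in> sets borel. emeasure \<mu> A = (INF U \<in> {U. open U \<and> A \<subseteq> U}. emeasure \<mu> U)) \<and>
     (\<forall>U. open U \<longrightarrow> emeasure \<mu> U = (SUP K \<in> {K. compact K \<and> K \<subseteq> U}. emeasure \<mu> K))"

text \<open>Square integrable functions (representatives of elements of L^2(G)).\<close>

definition sq_int :: "'g measure \<Rightarrow> ('g \<Rightarrow> complex) \<Rightarrow> bool" where
  "sq_int \<mu> F \<longleftrightarrow> F \<in> borel_measurable \<mu> \<and> integrable \<mu> (\<lambda>g. (cmod (F g))\<^sup>2)"

definition L2_inner :: "'g measure \<Rightarrow> ('g \<Rightarrow> complex) \<Rightarrow> ('g \<Rightarrow> complex) \<Rightarrow> complex" where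
  "L2_inner \<mu> F H = (\<integral>g. F g * cnj (H g) \<partial>\<mu>)"

definition L2_normsq :: "'g measure \<Rightarrow> ('g \<Rightarrow> complex) \<Rightarrow> real" where
  "L2_normsq \<mu> F = (\<integral>g. (cmod (F g))\<^sup>2 \<partial>\<mu>)"

definition strongly_cont_unitary_rep ::
  "(complex \<Rightarrow> 's::ab_group_add \<Rightarrow> 's) \<Rightarrow> ('s \<Rightarrow> 's \<Rightarrow> complex) \<Rightarrow>
   ('g::{topological_group_add, t2_space} \<Rightarrow> 's \<Rightarrow> 's) \<Rightarrow> bool" where
  "strongly_cont_unitary_rep sc ip \<pi> \<longleftrightarrow>
     (\<forall>g x y. \<pi> g (x + y) = \<pi> g x + \<pi> g y) \<and>
     (\<forall>g c x. \<pi> g (sc c x) = sc c (\<pi> g x)) \<and>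
     (\<forall>g x y. ip (\<pi> g x) (\<pi> g y) = ip x y) \<and>
     (\<forall>g. surj (\<pi> g)) \<and>
     \<pi> 0 = id \<and>
     (\<forall>g h. \<pi> (g + h) = \<pi> g \<circ> \<pi> h) \<and>
     (\<forall>s g0. ((\<lambda>g. hnorm ip (\<pi> g s - \<pi> g0 s)) \<longlongrightarrow> 0) (at g0))"

definition irreducible_rep ::
  "(complex \<Rightarrow> 's::ab_group_add \<Rightarrow> 's) \<Rightarrow> ('s \<Rightarrow> 's \<Rightarrow> complex) \<Rightarrow> ('g \<Rightarrow> 's \<Rightarrow> 's) \<Rightarrow> bool" where
  "irreducible_rep sc ip \<pi> \<longleftrightarrow>
     (\<exists>x::'s. x \<noteq> 0) \<and>
     (\<forall>A. lin_subspace sc A \<and> hclosed ip A \<and> (\<forall>g. \<pi> g ` A \<subseteq> A) \<longrightarrow> A = {0} \<or> A = UNIV)"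

definition wavelet :: "('s \<Rightarrow> 's \<Rightarrow> complex) \<Rightarrow> ('g \<Rightarrow> 's \<Rightarrow> 's) \<Rightarrow> 's \<Rightarrow> 's \<Rightarrow> 'g \<Rightarrow> complex" where
  "wavelet ip \<pi> f s = (\<lambda>g. ip s (\<pi> g f))"

definition is_window :: "'g measure \<Rightarrow> ('s \<Rightarrow> 's \<Rightarrow> complex) \<Rightarrow> ('g \<Rightarrow> 's \<Rightarrow> 's) \<Rightarrow> 's \<Rightarrow> bool" where
  "is_window \<mu> ip \<pi> f \<longleftrightarrow> sq_int \<mu> (\<lambda>g. ip f (\<pi> g f))"

text \<open>Values of K outside D are irrelevant.\<close>

definition duflo_moore ::
  "'g measure \<Rightarrow> (complex \<Rightarrow> 's::ab_group_add \<Rightarrow> 's) \<Rightarrow> ('s \<Rightarrow> 's \<Rightarrow> complex) \<Rightarrow>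
   ('g \<Rightarrow> 's \<Rightarrow> 's) \<Rightarrow> 's set \<Rightarrow> ('s \<Rightarrow> 's) \<Rightarrow> bool" where
  "duflo_moore \<mu> sc ip \<pi> D K \<longleftrightarrow>
     D = {f. is_window \<mu> ip \<pi> f} \<and>
     lin_subspace sc D \<and> hdense ip D \<and>
     (\<forall>x\<in>D. \<forall>y\<in>D. K (x + y) = K x + K y) \<and>
     (\<forall>c. \<forall>x\<in>D. K (sc c x) = sc c (K x)) \<and>
     (\<forall>x\<in>D. \<forall>y\<in>D. ip (K x) y = ip x (K y)) \<and>
     (\<forall>y z. (\<forall>x\<in>D. ip (K x) y = ip x z) \<longrightarrow> y \<in> D \<and> K y = z) \<and>
     (\<forall>x\<in>D. 0 \<le> Re (ip (K x) x)) \<and>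
     inj_on K D \<and> hdense ip (K ` D) \<and>
     (\<forall>f1\<in>D. \<forall>f2\<in>D. \<forall>s1 s2.
        L2_inner \<mu> (wavelet ip \<pi> f1 s1) (wavelet ip \<pi> f2 s2) = ip s1 s2 * ip (K f2) (K f1))"

text \<open>The window space: a Hilbert space W together with a linear map j from D into W,
  isometric for the inner product (Kf1, Kf2), with dense range, i.e. the Hilbert space
  completion of D; j identifies W \<inter> S with D.\<close>

definition window_space ::
  "(complex \<Rightarrow> 's::ab_group_add \<Rightarrow> 's) \<Rightarrow> ('s \<Rightarrow> 's \<Rightarrow> complex) \<Rightarrow> 's set \<Rightarrow> ('s \<Rightarrow> 's) \<Rightarrow>
   (complex \<Rightarrow> 'w::ab_group_add \<Rightarrow> 'w) \<Rightarrow> ('w \<Rightarrow> 'w \<Rightarrow> complex) \<Rightarrow> ('s \<Rightarrow> 'w) \<Rightarrow> bool" where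
  "window_space sc ip D K scW ipW j \<longleftrightarrow>
     hilbert_space scW ipW \<and>
     (\<forall>x\<in>D. \<forall>y\<in>D. j (x + y) = j x + j y) \<and>
     (\<forall>c. \<forall>x\<in>D. j (sc c x) = scW c (j x)) \<and>
     (\<forall>f1\<in>D. \<forall>f2\<in>D. ipW (j f1) (j f2) = ip (K f1) (K f2)) \<and>
     hdense ipW (j ` D)"

text \<open>The Hilbert tensor product W \<otimes> S, conjugate-linear in the first factor:
  a Hilbert space T with a map tens such that
  <f1 \<otimes> s1, f2 \<otimes> s2> = conj <f1,f2>_W <s1,s2>_S and the simple tensors span a dense subspace.\<close>

definition tensor_product ::
  "(complex \<Rightarrow> 'w::ab_group_add \<Rightarrow> 'w) \<Rightarrow> ('w \<Rightarrow> 'w \<Rightarrow> complex) \<Rightarrow>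
   (complex \<Rightarrow> 's::ab_group_add \<Rightarrow> 's) \<Rightarrow> ('s \<Rightarrow> 's \<Rightarrow> complex) \<Rightarrow>
   (complex \<Rightarrow> 't::ab_group_add \<Rightarrow> 't) \<Rightarrow> ('t \<Rightarrow> 't \<Rightarrow> complex) \<Rightarrow> ('w \<Rightarrow> 's \<Rightarrow> 't) \<Rightarrow> bool" where
  "tensor_product scW ipW sc ip scT ipT tens \<longleftrightarrow>
     hilbert_space scT ipT \<and>
     (\<forall>a b s. tens (a + b) s = tens a s + tens b s) \<and>
     (\<forall>c a s. tens (scW c a) s = scT (cnj c) (tens a s)) \<and>
     (\<forall>a s t. tens a (s + t) = tens a s + tens a t) \<and>
     (\<forall>c a s. tens a (sc c s) = scT c (tens a s)) \<and>
     (\<forall>a b s t. ipT (tens a s) (tens b t) = cnj (ipW a b) * ip s t) \<and>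
     (\<forall>x e. e > 0 \<longrightarrow>
        (\<exists>n (a :: nat \<Rightarrow> 'w) (s :: nat \<Rightarrow> 's). hnorm ipT (x - (\<Sum>i<n. tens (a i) (s i))) < e))"

end

theory Submission
  imports Defs
begin

locale ipsp =
  fixes sc :: "complex \<Rightarrow> 'a::ab_group_add \<Rightarrow> 'a" and ip :: "'a \<Rightarrow> 'a \<Rightarrow> complex"
  assumes cis: "complex_inner_space sc ip"
begin

lemmas cis_all = cis[unfolded complex_inner_space_def]
lemma vs: "vector_space sc" using cis_all by (rule conjunct1)
lemma ip_add_left: "ip (x + y) z = ip x z + ip y z"
  using cis_all[THEN conjunct2, THEN conjunct1] by blast
lemma ip_scale_left: "ip (sc c x) y = c * ip x y"
  using cis_all[THEN conjunct2, THEN conjunct2, THEN conjunct1] by blast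
lemma ip_sym: "ip y x = cnj (ip x y)"
  using cis_all[THEN conjunct2, THEN conjunct2, THEN conjunct2, THEN conjunct1] by blast
lemma ip_nonneg: "0 \<le> Re (ip x x)"
  using cis_all[THEN conjunct2, THEN conjunct2, THEN conjunct2, THEN conjunct2, THEN conjunct1] by blast
lemma ip_def0: "ip x x = 0 \<Longrightarrow> x = 0"
  using cis_all[THEN conjunct2, THEN conjunct2, THEN conjunct2, THEN conjunct2, THEN conjunct2] by blast

lemma sc_add: "sc c (x + y) = sc c x + sc c y"
  using vs unfolding vector_space_def by auto
lemma sc_zero: "sc c 0 = 0"
  using sc_add[of c 0 0] by simp
lemma sc_minus: "sc c (- x) = - sc c x"
proof -
  have "sc c x + sc c (-x) = 0" using sc_add[of c x "-x"] sc_zero by simp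
  then show ?thesis by (rule add.inverse_unique[symmetric])
qed
lemma sc_diff: "sc c (x - y) = sc c x - sc c y"
  using sc_add[of c x "-y"] by (simp add: sc_minus)
lemma sc_sum: "sc c (sum f A) = sum (\<lambda>i. sc c (f i)) A"
  by (induction A rule: infinite_finite_induct) (auto simp: sc_zero sc_add)

lemma ip_zero_left[simp]: "ip 0 y = 0"
  using ip_add_left[of 0 0 y] by simp
lemma ip_add_right: "ip x (y + z) = ip x y + ip x z"
  by (metis ip_sym ip_add_left complex_cnj_add)
lemma ip_zero_right[simp]: "ip x 0 = 0"
  using ip_add_right[of x 0 0] by simp
lemma ip_minus_left: "ip (- x) y = - ip x y"
proof -
  have "ip x y + ip (-x) y = 0" using ip_add_left[of x "-x" y] by simp
  then show ?thesis by (rule add.inverse_unique[symmetric])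
qed
lemma ip_minus_right: "ip x (- y) = - ip x y"
proof -
  have "ip x y + ip x (-y) = 0" using ip_add_right[of x y "-y"] by simp
  then show ?thesis by (rule add.inverse_unique[symmetric])
qed
lemma ip_diff_left: "ip (x - y) z = ip x z - ip y z"
  using ip_add_left[of x "-y" z] by (simp add: ip_minus_left)
lemma ip_diff_right: "ip x (y - z) = ip x y - ip x z"
  using ip_add_right[of x y "-z"] by (simp add: ip_minus_right)
lemma ip_scale_right: "ip x (sc c y) = cnj c * ip x y"
  by (metis ip_sym ip_scale_left complex_cnj_mult)
lemma ip_sum_left: "ip (sum f A) y = (\<Sum>i\<in>A. ip (f i) y)"
  by (induction A rule: infinite_finite_induct) (auto simp: ip_add_left)
lemma ip_sum_right: "ip x (sum f A) = (\<Sum>i\<in>A. ip x (f i))"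
  by (induction A rule: infinite_finite_induct) (auto simp: ip_add_right)

lemma ip_self_real: "ip x x = complex_of_real (Re (ip x x))"
proof -
  have "Im (ip x x) = - Im (ip x x)" using arg_cong[OF ip_sym[of x x], of Im] by simp
  then have "Im (ip x x) = 0" by simp
  then show ?thesis by (simp add: complex_eq_iff)
qed

lemma hnorm_sq: "(hnorm ip x)\<^sup>2 = Re (ip x x)"
  unfolding hnorm_def using ip_nonneg[of x] by simp
lemma hnorm_nonneg: "0 \<le> hnorm ip x" unfolding hnorm_def using ip_nonneg[of x] by simp
lemma hnorm_zero[simp]: "hnorm ip 0 = 0" unfolding hnorm_def by simp
lemma hnorm_eq0: "hnorm ip x = 0 \<longleftrightarrow> x = 0"
proof
  assume "hnorm ip x = 0"
  then have "Re (ip x x) = 0" unfolding hnorm_def by simp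
  then have "ip x x = 0" by (subst ip_self_real) simp
  then show "x = 0" by (rule ip_def0)
qed simp

lemma cs_sq: "(cmod (ip x y))\<^sup>2 \<le> Re (ip x x) * Re (ip y y)"
proof (cases "y = 0")
  case True then show ?thesis by simp
next
  case False
  define c where "c = Re (ip y y)"
  have c0: "c > 0" using False ip_def0[of y] ip_self_real[of y] ip_nonneg[of y] unfolding c_def
    by (metis less_eq_real_def of_real_0)
  define b where "b = ip x y"
  define t where "t = b / complex_of_real c"
  have "ip (x - sc t y) (x - sc t y) = ip x x - cnj t * b - t * cnj b + t * cnj t * c"
    unfolding b_def c_def
    by (simp add: ip_diff_left ip_diff_right ip_scale_left ip_scale_right algebra_simps ip_sym[of x y]
       flip: ip_self_real)
  also have "\<dots> = ip x x - complex_of_real ((cmod b)\<^sup>2 / c)"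
  proof -
    have bb: "b * cnj b = complex_of_real ((cmod b)\<^sup>2)" by (metis complex_norm_square)
    have ct: "cnj t = cnj b / complex_of_real c" unfolding t_def by simp
    have "cnj t * b = complex_of_real ((cmod b)\<^sup>2 / c)"
      unfolding ct using bb by (simp add: field_simps)
    moreover have "t * cnj b = complex_of_real ((cmod b)\<^sup>2 / c)"
      unfolding t_def using bb by (simp add: field_simps)
    moreover have "t * cnj t * c = complex_of_real ((cmod b)\<^sup>2 / c)"
      unfolding ct unfolding t_def using bb c0 by (simp add: field_simps power2_eq_square)
    ultimately show ?thesis by simp
  qed
  finally have "0 \<le> Re (ip x x) - (cmod b)\<^sup>2 / c"
    using ip_nonneg[of "x - sc t y"] by simp
  then show ?thesis using c0 unfolding b_def c_def[symmetric] by (simp add: field_simps)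
qed

lemma cs: "cmod (ip x y) \<le> hnorm ip x * hnorm ip y"
proof -
  have "(cmod (ip x y))\<^sup>2 \<le> (hnorm ip x * hnorm ip y)\<^sup>2"
    using cs_sq[of x y] by (simp add: power_mult_distrib hnorm_sq)
  then show ?thesis using hnorm_nonneg
    by (meson mult_nonneg_nonneg power2_le_imp_le)
qed

lemma hnorm_triangle: "hnorm ip (x + y) \<le> hnorm ip x + hnorm ip y"
proof -
  have "Re (ip (x+y) (x+y)) = Re (ip x x) + Re (ip y y) + 2 * Re (ip x y)"
    by (simp add: ip_add_left ip_add_right ip_sym[of x y])
  also have "\<dots> \<le> Re (ip x x) + Re (ip y y) + 2 * (hnorm ip x * hnorm ip y)"
    using cs[of x y] complex_Re_le_cmod[of "ip x y"] by simp
  also have "\<dots> = (hnorm ip x + hnorm ip y)\<^sup>2"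
    by (simp add: power2_sum hnorm_sq)
  finally have "(hnorm ip (x + y))\<^sup>2 \<le> (hnorm ip x + hnorm ip y)\<^sup>2" by (simp add: hnorm_sq)
  then show ?thesis using hnorm_nonneg
    by (meson add_nonneg_nonneg power2_le_imp_le)
qed

lemma hnorm_minus: "hnorm ip (- x) = hnorm ip x"
  unfolding hnorm_def by (simp add: ip_minus_left ip_minus_right)
lemma hnorm_commute: "hnorm ip (x - y) = hnorm ip (y - x)"
  by (metis hnorm_minus minus_diff_eq)
lemma hnorm_triangle_diff: "hnorm ip (x - z) \<le> hnorm ip (x - y) + hnorm ip (y - z)"
  using hnorm_triangle[of "x - y" "y - z"] by simp
lemma hnorm_rev: "\<bar>hnorm ip x - hnorm ip y\<bar> \<le> hnorm ip (x - y)"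
  using hnorm_triangle[of "x - y" y] hnorm_triangle[of "y - x" x] hnorm_commute[of x y] by auto
lemma hnorm_sum: "hnorm ip (sum f A) \<le> (\<Sum>i\<in>A. hnorm ip (f i))"
proof (induction A rule: infinite_finite_induct)
  case (insert a A)
  then show ?case using hnorm_triangle[of "f a" "sum f A"] by simp
qed simp_all
lemma hnorm_scale: "hnorm ip (sc c x) = cmod c * hnorm ip x"
proof -
  have "Re (ip (sc c x) (sc c x)) = (cmod c)\<^sup>2 * Re (ip x x)"
  proof -
    have "ip (sc c x) (sc c x) = (c * cnj c) * ip x x"
      by (simp add: ip_scale_left ip_scale_right)
    also have "\<dots> = complex_of_real ((cmod c)\<^sup>2) * complex_of_real (Re (ip x x))"
      by (subst ip_self_real) (metis complex_norm_square)
    finally show ?thesis by (simp flip: of_real_mult)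
  qed
  then show ?thesis unfolding hnorm_def by (simp add: real_sqrt_mult)
qed

end

lemma meas_cnj[measurable]: "G \<in> borel_measurable M \<Longrightarrow> (\<lambda>x. cnj (G x)) \<in> borel_measurable M"
  by (rule measurable_compose[OF _ borel_measurable_continuous_onI]) (auto intro: continuous_intros)

context fixes \<mu> :: "'g measure"
begin

lemma sq_int_meas: "sq_int \<mu> F \<Longrightarrow> F \<in> borel_measurable \<mu>" unfolding sq_int_def by simp
lemma sq_int_int: "sq_int \<mu> F \<Longrightarrow> integrable \<mu> (\<lambda>g. (cmod (F g))\<^sup>2)" unfolding sq_int_def by simp

lemma prod_bound: "cmod (a * cnj b) \<le> (cmod a)\<^sup>2 + (cmod b)\<^sup>2"
proof -
  have "cmod (a * cnj b) = cmod a * cmod b" by (simp add: norm_mult)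
  also have "\<dots> \<le> (cmod a)\<^sup>2 + (cmod b)\<^sup>2"
    using sum_squares_bound[of "cmod a" "cmod b"] mult_nonneg_nonneg[OF norm_ge_zero norm_ge_zero, of a b]
    by linarith
  finally show ?thesis .
qed

lemma sq_int_prod:
  assumes "sq_int \<mu> F" "sq_int \<mu> G"
  shows "integrable \<mu> (\<lambda>g. F g * cnj (G g))"
proof (rule Bochner_Integration.integrable_bound)
  show "integrable \<mu> (\<lambda>g. (cmod (F g))\<^sup>2 + (cmod (G g))\<^sup>2)"
    using assms by (simp add: sq_int_int)
  show "(\<lambda>g. F g * cnj (G g)) \<in> borel_measurable \<mu>"
    using assms[THEN sq_int_meas] by measurable
  show "AE x in \<mu>. norm (F x * cnj (G x)) \<le> norm ((cmod (F x))\<^sup>2 + (cmod (G x))\<^sup>2)"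
    using prod_bound by simp
qed

lemma sq_int_add:
  assumes "sq_int \<mu> F" "sq_int \<mu> G"
  shows "sq_int \<mu> (\<lambda>g. F g + G g)"
  unfolding sq_int_def
proof
  show "(\<lambda>g. F g + G g) \<in> borel_measurable \<mu>" using assms[THEN sq_int_meas] by measurable
  show "integrable \<mu> (\<lambda>g. (cmod (F g + G g))\<^sup>2)"
  proof (rule Bochner_Integration.integrable_bound)
    show "integrable \<mu> (\<lambda>g. 2 * (cmod (F g))\<^sup>2 + 2 * (cmod (G g))\<^sup>2)"
      using assms by (simp add: sq_int_int)
    show "(\<lambda>g. (cmod (F g + G g))\<^sup>2) \<in> borel_measurable \<mu>" using assms[THEN sq_int_meas] by measurable
    have "(cmod (a + b))\<^sup>2 \<le> 2 * (cmod a)\<^sup>2 + 2 * (cmod b)\<^sup>2" for a b :: complex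
    proof -
      have "cmod (a + b) \<le> cmod a + cmod b" by (rule norm_triangle_ineq)
      then have "(cmod (a + b))\<^sup>2 \<le> (cmod a + cmod b)\<^sup>2"
        by (simp add: power_mono)
      also have "\<dots> \<le> 2 * (cmod a)\<^sup>2 + 2 * (cmod b)\<^sup>2"
        using power2_sum[of "cmod a" "cmod b"] sum_squares_bound[of "cmod a" "cmod b"] by linarith
      finally show ?thesis .
    qed
    then show "AE x in \<mu>. norm ((cmod (F x + G x))\<^sup>2) \<le> norm (2 * (cmod (F x))\<^sup>2 + 2 * (cmod (G x))\<^sup>2)"
      by simp
  qed
qed

lemma sq_int_mult:
  assumes "sq_int \<mu> F"
  shows "sq_int \<mu> (\<lambda>g. c * F g)"
  using assms unfolding sq_int_def by (auto simp: norm_mult power_mult_distrib)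

lemma sq_int_minus: "sq_int \<mu> F \<Longrightarrow> sq_int \<mu> (\<lambda>g. - F g)"
  using sq_int_mult[of F "-1"] by simp

lemma sq_int_diff: "sq_int \<mu> F \<Longrightarrow> sq_int \<mu> G \<Longrightarrow> sq_int \<mu> (\<lambda>g. F g - G g)"
  using sq_int_add[of F "\<lambda>g. - G g"] sq_int_minus[of G] by simp

lemma sq_int_zero: "sq_int \<mu> (\<lambda>g. 0)" unfolding sq_int_def by simp

lemma sq_int_sum: "(\<And>i. i \<in> A \<Longrightarrow> sq_int \<mu> (F i)) \<Longrightarrow> sq_int \<mu> (\<lambda>g. \<Sum>i\<in>A. F i g)"
proof (induction A rule: infinite_finite_induct)
  case (insert a A)
  then show ?case using sq_int_add[of "F a" "\<lambda>g. \<Sum>i\<in>A. F i g"] by simp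
qed (simp_all add: sq_int_zero)

lemma sq_int_cong_AE: "sq_int \<mu> F \<Longrightarrow> G \<in> borel_measurable \<mu> \<Longrightarrow> AE g in \<mu>. F g = G g \<Longrightarrow> sq_int \<mu> G"
proof -
  assume a: "sq_int \<mu> F" "G \<in> borel_measurable \<mu>" "AE g in \<mu>. F g = G g"
  have "integrable \<mu> (\<lambda>g. (cmod (G g))\<^sup>2)"
  proof (subst integrable_cong_AE)
    show "AE x in \<mu>. (cmod (G x))\<^sup>2 = (cmod (F x))\<^sup>2" using a(3) by (rule AE_mp) auto
  qed (use a in \<open>auto simp: sq_int_def\<close>)
  then show ?thesis using a unfolding sq_int_def by simp
qed

lemma L2_inner_self: "L2_inner \<mu> F F = complex_of_real (L2_normsq \<mu> F)"
  unfolding L2_inner_def L2_normsq_def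
  by (simp add: complex_norm_square[symmetric] flip: integral_complex_of_real)

lemma L2_normsq_nonneg: "0 \<le> L2_normsq \<mu> F"
  unfolding L2_normsq_def by simp

lemma L2_normsq_cong_AE:
  assumes [measurable]: "F \<in> borel_measurable \<mu>" "G \<in> borel_measurable \<mu>"
    and ae: "AE g in \<mu>. F g = G g"
  shows "L2_normsq \<mu> F = L2_normsq \<mu> G"
  unfolding L2_normsq_def
proof (rule integral_cong_AE)
  from ae show "AE x in \<mu>. (cmod (F x))\<^sup>2 = (cmod (G x))\<^sup>2" by (rule AE_mp) simp
qed measurable

lemma L2_normsq_zero_iff: "sq_int \<mu> F \<Longrightarrow> L2_normsq \<mu> F = 0 \<longleftrightarrow> (AE g in \<mu>. F g = 0)"
  unfolding L2_normsq_def
  by (subst integral_nonneg_eq_0_iff_AE) (auto simp: sq_int_int)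

lemma L2_inner_add_left: "sq_int \<mu> F \<Longrightarrow> sq_int \<mu> G \<Longrightarrow> sq_int \<mu> H \<Longrightarrow>
  L2_inner \<mu> (\<lambda>g. F g + G g) H = L2_inner \<mu> F H + L2_inner \<mu> G H"
  unfolding L2_inner_def using sq_int_prod[of F H] sq_int_prod[of G H]
  by (simp add: distrib_right)

lemma L2_inner_add_right: "sq_int \<mu> F \<Longrightarrow> sq_int \<mu> G \<Longrightarrow> sq_int \<mu> H \<Longrightarrow>
  L2_inner \<mu> H (\<lambda>g. F g + G g) = L2_inner \<mu> H F + L2_inner \<mu> H G"
  unfolding L2_inner_def using sq_int_prod[of H F] sq_int_prod[of H G]
  by (simp add: distrib_left)

lemma L2_inner_diff_left: "sq_int \<mu> F \<Longrightarrow> sq_int \<mu> G \<Longrightarrow> sq_int \<mu> H \<Longrightarrow>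
  L2_inner \<mu> (\<lambda>g. F g - G g) H = L2_inner \<mu> F H - L2_inner \<mu> G H"
  unfolding L2_inner_def using sq_int_prod[of F H] sq_int_prod[of G H]
  by (simp add: left_diff_distrib)

lemma L2_inner_diff_right: "sq_int \<mu> F \<Longrightarrow> sq_int \<mu> G \<Longrightarrow> sq_int \<mu> H \<Longrightarrow>
  L2_inner \<mu> H (\<lambda>g. F g - G g) = L2_inner \<mu> H F - L2_inner \<mu> H G"
  unfolding L2_inner_def using sq_int_prod[of H F] sq_int_prod[of H G]
  by (simp add: right_diff_distrib)

lemma L2_inner_sum_left: "(\<And>i. i \<in> A \<Longrightarrow> sq_int \<mu> (F i)) \<Longrightarrow> sq_int \<mu> H \<Longrightarrow>
  L2_inner \<mu> (\<lambda>g. \<Sum>i\<in>A. F i g) H = (\<Sum>i\<in>A. L2_inner \<mu> (F i) H)"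
  unfolding L2_inner_def using sq_int_prod[of _ H]
  by (simp add: sum_distrib_right)

lemma L2_inner_sum_right: "(\<And>i. i \<in> A \<Longrightarrow> sq_int \<mu> (F i)) \<Longrightarrow> sq_int \<mu> H \<Longrightarrow>
  L2_inner \<mu> H (\<lambda>g. \<Sum>i\<in>A. F i g) = (\<Sum>i\<in>A. L2_inner \<mu> H (F i))"
  unfolding L2_inner_def using sq_int_prod[of H]
  by (simp add: sum_distrib_left)

lemma L2_normsq_diff_expand:
  assumes "sq_int \<mu> F" "sq_int \<mu> G"
  shows "L2_normsq \<mu> (\<lambda>g. F g - G g) =
     Re (L2_inner \<mu> F F - L2_inner \<mu> F G - L2_inner \<mu> G F + L2_inner \<mu> G G)"
proof -
  have "complex_of_real (L2_normsq \<mu> (\<lambda>g. F g - G g)) = L2_inner \<mu> (\<lambda>g. F g - G g) (\<lambda>g. F g - G g)"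
    by (simp add: L2_inner_self)
  also have "\<dots> = L2_inner \<mu> F F - L2_inner \<mu> F G - L2_inner \<mu> G F + L2_inner \<mu> G G"
    using assms sq_int_diff[OF assms]
    by (simp add: L2_inner_diff_left L2_inner_diff_right)
  finally show ?thesis by (metis Re_complex_of_real)
qed

lemma sq_ineq_t:
  fixes x y :: complex and t :: real
  assumes "t > 0"
  shows "(cmod (x + y))\<^sup>2 \<le> (1 + t) * (cmod x)\<^sup>2 + (1 + 1 / t) * (cmod y)\<^sup>2"
proof -
  define a where "a = cmod x"
  define b where "b = cmod y"
  have "cmod (x + y) \<le> a + b" unfolding a_def b_def by (rule norm_triangle_ineq)
  then have "(cmod (x + y))\<^sup>2 \<le> (a + b)\<^sup>2" by (simp add: power_mono)
  also have "\<dots> \<le> (1 + t) * a\<^sup>2 + (1 + 1 / t) * b\<^sup>2"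
  proof -
    have "0 \<le> (t * a - b)\<^sup>2" by simp
    then have "2 * a * b * t \<le> t\<^sup>2 * a\<^sup>2 + b\<^sup>2" by (simp add: power2_eq_square algebra_simps)
    then have "2 * a * b \<le> t * a\<^sup>2 + b\<^sup>2 / t" using assms
      by (simp add: field_simps power2_eq_square)
    then show ?thesis by (simp add: power2_sum algebra_simps)
  qed
  finally show ?thesis unfolding a_def b_def .
qed

lemma L2_minkowski:
  assumes F: "sq_int \<mu> F" and G: "sq_int \<mu> G"
  shows "sqrt (L2_normsq \<mu> (\<lambda>g. F g + G g)) \<le> sqrt (L2_normsq \<mu> F) + sqrt (L2_normsq \<mu> G)"
proof -
  define a where "a = L2_normsq \<mu> F"
  define b where "b = L2_normsq \<mu> G"
  have a0: "a \<ge> 0" and b0: "b \<ge> 0" unfolding a_def b_def by (simp_all add: L2_normsq_nonneg)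
  show ?thesis
  proof (cases "a = 0")
    case True
    then have "AE g in \<mu>. F g = 0" using L2_normsq_zero_iff[OF F] a_def by simp
    then have "AE g in \<mu>. F g + G g = G g" by (rule AE_mp) auto
    then have "L2_normsq \<mu> (\<lambda>g. F g + G g) = L2_normsq \<mu> G"
      using G sq_int_add[OF F G] by (intro L2_normsq_cong_AE) (auto dest: sq_int_meas)
    then show ?thesis using True a_def by simp
  next
    case aF: False
    show ?thesis
    proof (cases "b = 0")
      case True
      then have "AE g in \<mu>. G g = 0" using L2_normsq_zero_iff[OF G] b_def by simp
      then have "AE g in \<mu>. F g + G g = F g" by (rule AE_mp) auto
      then have "L2_normsq \<mu> (\<lambda>g. F g + G g) = L2_normsq \<mu> F"
        using F sq_int_add[OF F G] by (intro L2_normsq_cong_AE) (auto dest: sq_int_meas)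
      then show ?thesis using True b_def by simp
    next
      case False
      have ap: "a > 0" using aF a0 by simp
      have bp: "b > 0" using False b0 by simp
      define t where "t = sqrt b / sqrt a"
      have tp: "t > 0" unfolding t_def using ap bp by simp
      have "L2_normsq \<mu> (\<lambda>g. F g + G g) \<le> (\<integral>g. (1 + t) * (cmod (F g))\<^sup>2 + (1 + 1 / t) * (cmod (G g))\<^sup>2 \<partial>\<mu>)"
        unfolding L2_normsq_def
        using sq_ineq_t[OF tp] sq_int_int[OF F] sq_int_int[OF G] sq_int_int[OF sq_int_add[OF F G]]
        by (intro integral_mono) auto
      also have "\<dots> = (1 + t) * a + (1 + 1 / t) * b"
        unfolding a_def b_def L2_normsq_def using sq_int_int[OF F] sq_int_int[OF G] by simp
      also have "\<dots> = (sqrt a + sqrt b)\<^sup>2"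
        unfolding t_def using ap bp
        by (simp add: field_simps power2_sum)
      finally show ?thesis unfolding a_def[symmetric] b_def[symmetric]
        using ap bp by (simp add: real_le_lsqrt)
    qed
  qed
qed

definition L2n :: "('g \<Rightarrow> complex) \<Rightarrow> real" where "L2n F = sqrt (L2_normsq \<mu> F)"

lemma L2n_nonneg: "0 \<le> L2n F" unfolding L2n_def using L2_normsq_nonneg[of F] by simp

lemma L2n_tri: "sq_int \<mu> F \<Longrightarrow> sq_int \<mu> G \<Longrightarrow> sq_int \<mu> H \<Longrightarrow>
   L2n (\<lambda>g. F g - H g) \<le> L2n (\<lambda>g. F g - G g) + L2n (\<lambda>g. G g - H g)"
  unfolding L2n_def using L2_minkowski[of "\<lambda>g. F g - G g" "\<lambda>g. G g - H g"] sq_int_diff by simp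

lemma L2n_commute: "L2n (\<lambda>g. F g - G g) = L2n (\<lambda>g. G g - F g)"
  unfolding L2n_def L2_normsq_def by (simp add: norm_minus_commute)

lemma L2n_mult: "L2n (\<lambda>g. c * F g) = cmod c * L2n F"
  unfolding L2n_def L2_normsq_def by (simp add: norm_mult power_mult_distrib real_sqrt_mult)

lemma L2n_cong_AE: "F \<in> borel_measurable \<mu> \<Longrightarrow> G \<in> borel_measurable \<mu> \<Longrightarrow>
  AE g in \<mu>. F g = G g \<Longrightarrow> L2n F = L2n G"
  unfolding L2n_def by (metis L2_normsq_cong_AE)

lemma L2n_zero_iff: "sq_int \<mu> F \<Longrightarrow> L2n F = 0 \<longleftrightarrow> (AE g in \<mu>. F g = 0)"
  unfolding L2n_def by (metis L2_normsq_zero_iff real_sqrt_eq_zero_cancel_iff real_sqrt_zero)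

end

locale wp = S: ipsp sc ip + W: ipsp scW ipW + T: ipsp scT ipT
  for sc :: "complex \<Rightarrow> 's::ab_group_add \<Rightarrow> 's" and ip
  and scW :: "complex \<Rightarrow> 'w::ab_group_add \<Rightarrow> 'w" and ipW
  and scT :: "complex \<Rightarrow> 't::ab_group_add \<Rightarrow> 't" and ipT +
  fixes \<mu> :: "'g::{topological_group_add, t2_space} measure"
    and \<pi> :: "'g \<Rightarrow> 's \<Rightarrow> 's" and D :: "'s set" and K :: "'s \<Rightarrow> 's"
    and j :: "'s \<Rightarrow> 'w" and tens :: "'w \<Rightarrow> 's \<Rightarrow> 't"
  assumes sets_mu: "sets \<mu> = sets borel"
    and pi_add: "\<And>g x y. \<pi> g (x + y) = \<pi> g x + \<pi> g y"
    and pi_cont: "\<And>s g0. ((\<lambda>g. hnorm ip (\<pi> g s - \<pi> g0 s)) \<longlongrightarrow> 0) (at g0)"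
    and D_zero: "0 \<in> D"
    and K_add: "\<And>x y. x \<in> D \<Longrightarrow> y \<in> D \<Longrightarrow> K (x + y) = K x + K y"
    and K_inj: "inj_on K D"
    and orth: "\<And>f1 f2 s1 s2. f1 \<in> D \<Longrightarrow> f2 \<in> D \<Longrightarrow>
        L2_inner \<mu> (wavelet ip \<pi> f1 s1) (wavelet ip \<pi> f2 s2) = ip s1 s2 * ip (K f2) (K f1)"
    and j_ip: "\<And>f1 f2. f1 \<in> D \<Longrightarrow> f2 \<in> D \<Longrightarrow> ipW (j f1) (j f2) = ip (K f1) (K f2)"
    and j_dense: "hdense ipW (j ` D)"
    and tens_add1: "\<And>a b s. tens (a + b) s = tens a s + tens b s"
    and tens_add2: "\<And>a s t. tens a (s + t) = tens a s + tens a t"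
    and tens_sc2: "\<And>a c s. tens a (sc c s) = scT c (tens a s)"
    and tens_ip: "\<And>a b s t. ipT (tens a s) (tens b t) = cnj (ipW a b) * ip s t"
    and tens_dense: "\<And>x e. e > 0 \<Longrightarrow> \<exists>(n::nat) a s. hnorm ipT (x - (\<Sum>i<n. tens (a i) (s i))) < e"
begin

lemma pi_zero: "\<pi> g 0 = 0"
  using pi_add[of g 0 0] by simp

lemma K_zero: "K 0 = 0"
  using K_add[OF D_zero D_zero] by simp

lemma K_nz: "f \<in> D \<Longrightarrow> f \<noteq> 0 \<Longrightarrow> K f \<noteq> 0"
  using K_inj D_zero K_zero unfolding inj_on_def by metis

lemma tens_zero1: "tens 0 s = 0"
  using tens_add1[of 0 0 s] by simp

lemma tens_minus1: "tens (- a) s = - tens a s"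
proof -
  have "tens a s + tens (-a) s = 0" using tens_add1[of a "-a" s] by (simp add: tens_zero1)
  then show ?thesis by (rule add.inverse_unique[symmetric])
qed

lemma tens_diff1: "tens (a - b) s = tens a s - tens b s"
  using tens_add1[of a "-b" s] by (simp add: tens_minus1)

lemma hnorm_tens: "hnorm ipT (tens a s) = hnorm ipW a * hnorm ip s"
proof -
  have "Re (ipT (tens a s) (tens a s)) = Re (ipW a a) * Re (ip s s)"
    unfolding tens_ip by (subst W.ip_self_real, subst S.ip_self_real) simp
  then show ?thesis unfolding hnorm_def by (simp add: real_sqrt_mult)
qed

lemma wavelet_cont: "continuous_on UNIV (wavelet ip \<pi> f s)"
proof (rule continuous_at_imp_continuous_on, intro ballI)
  fix g0 :: 'g
  have "((\<lambda>g. ip s (\<pi> g f) - ip s (\<pi> g0 f)) \<longlongrightarrow> 0) (at g0)"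
  proof (rule Lim_null_comparison)
    show "\<forall>\<^sub>F g in at g0. norm (ip s (\<pi> g f) - ip s (\<pi> g0 f)) \<le> hnorm ip s * hnorm ip (\<pi> g f - \<pi> g0 f)"
      using S.cs by (simp add: S.ip_diff_right[symmetric])
    show "((\<lambda>g. hnorm ip s * hnorm ip (\<pi> g f - \<pi> g0 f)) \<longlongrightarrow> 0) (at g0)"
      using tendsto_mult_right_zero[OF pi_cont] by simp
  qed
  then have "((\<lambda>g. ip s (\<pi> g f)) \<longlongrightarrow> ip s (\<pi> g0 f)) (at g0)"
    by (rule LIM_zero_cancel)
  then show "isCont (wavelet ip \<pi> f s) g0"
    unfolding isCont_def wavelet_def by simp
qed

lemma wavelet_meas: "wavelet ip \<pi> f s \<in> borel_measurable \<mu>"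
  unfolding measurable_cong_sets[OF sets_mu refl]
  by (rule borel_measurable_continuous_onI[OF wavelet_cont])

lemma wavelet_sq_int:
  assumes f: "f \<in> D"
  shows "sq_int \<mu> (wavelet ip \<pi> f s)"
proof (cases "f = 0 \<or> s = 0")
  case True
  then have "wavelet ip \<pi> f s = (\<lambda>g. 0)" unfolding wavelet_def by (auto simp: pi_zero)
  then show ?thesis by (simp add: sq_int_zero)
next
  case False
  let ?w = "wavelet ip \<pi> f s"
  have "ip s s \<noteq> 0" using False S.ip_def0 by blast
  moreover have "ip (K f) (K f) \<noteq> 0" using False K_nz[OF f] S.ip_def0 by blast
  ultimately have "L2_inner \<mu> ?w ?w \<noteq> 0" using orth[OF f f, of s s] by simp
  then have "integrable \<mu> (\<lambda>g. ?w g * cnj (?w g))"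
    unfolding L2_inner_def using not_integrable_integral_eq by blast
  then have "integrable \<mu> (\<lambda>g. norm (?w g * cnj (?w g)))" by (rule integrable_norm)
  then have "integrable \<mu> (\<lambda>g. (cmod (?w g))\<^sup>2)"
    by (simp add: norm_mult power2_eq_square)
  then show ?thesis unfolding sq_int_def using wavelet_meas by simp
qed

lemma wavelet_inner:
  assumes "f1 \<in> D" "f2 \<in> D"
  shows "L2_inner \<mu> (wavelet ip \<pi> f1 s1) (wavelet ip \<pi> f2 s2) = ipT (tens (j f1) s1) (tens (j f2) s2)"
  unfolding orth[OF assms] tens_ip j_ip[OF assms] using S.ip_sym[of "K f1" "K f2"] by simp

lemma wavelet_scale: "wavelet ip \<pi> f (sc c s) g = c * wavelet ip \<pi> f s g"
  unfolding wavelet_def by (simp add: S.ip_scale_left)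

definition valid :: "('s \<times> 's) list \<Rightarrow> bool" where
  "valid R \<longleftrightarrow> (\<forall>p\<in>set R. fst p \<in> D)"

definition XR :: "('s \<times> 's) list \<Rightarrow> 't" where
  "XR R = sum_list (map (\<lambda>p. tens (j (fst p)) (snd p)) R)"

definition PhiR :: "('s \<times> 's) list \<Rightarrow> 'g \<Rightarrow> complex" where
  "PhiR R = (\<lambda>g. sum_list (map (\<lambda>p. wavelet ip \<pi> (fst p) (snd p) g) R))"

lemma valid_simps[simp]: "valid []" "valid (p # R) \<longleftrightarrow> fst p \<in> D \<and> valid R"
  "valid (R @ R') \<longleftrightarrow> valid R \<and> valid R'"
  unfolding valid_def by auto

lemma XR_simps[simp]: "XR [] = 0" "XR (p # R) = tens (j (fst p)) (snd p) + XR R"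
  "XR (R @ R') = XR R + XR R'"
  unfolding XR_def by auto

lemma PhiR_simps: "PhiR [] = (\<lambda>g. 0)" "PhiR (p # R) = (\<lambda>g. wavelet ip \<pi> (fst p) (snd p) g + PhiR R g)"
  "PhiR (R @ R') = (\<lambda>g. PhiR R g + PhiR R' g)"
  unfolding PhiR_def by auto

lemma PhiR_sq_int: "valid R \<Longrightarrow> sq_int \<mu> (PhiR R)"
proof (induction R)
  case Nil then show ?case by (simp add: PhiR_simps sq_int_zero)
next
  case (Cons p R)
  then show ?case unfolding PhiR_simps
    using sq_int_add[OF wavelet_sq_int[of "fst p" "snd p"] Cons.IH] by simp
qed

lemma PhiR_meas: "valid R \<Longrightarrow> PhiR R \<in> borel_measurable \<mu>"
  using PhiR_sq_int sq_int_meas by blast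

lemma PhiR_inner1:
  assumes "f \<in> D" "valid R"
  shows "L2_inner \<mu> (wavelet ip \<pi> f s) (PhiR R) = ipT (tens (j f) s) (XR R)"
  using assms(2)
proof (induction R)
  case Nil then show ?case by (simp add: PhiR_simps L2_inner_def)
next
  case (Cons p R)
  then show ?case unfolding PhiR_simps XR_simps
    by (simp add: L2_inner_add_right wavelet_sq_int PhiR_sq_int assms(1) wavelet_inner T.ip_add_right)
qed

lemma PhiR_inner:
  assumes "valid R" "valid R'"
  shows "L2_inner \<mu> (PhiR R) (PhiR R') = ipT (XR R) (XR R')"
  using assms(1)
proof (induction R)
  case Nil then show ?case by (simp add: PhiR_simps L2_inner_def)
next
  case (Cons p R)
  then show ?case unfolding PhiR_simps XR_simps
    by (simp add: L2_inner_add_left wavelet_sq_int PhiR_sq_int assms(2) PhiR_inner1 T.ip_add_left)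
qed

lemma hnorm_diff_expand: "(hnorm ipT (x - y))\<^sup>2 = Re (ipT x x - ipT x y - ipT y x + ipT y y)"
  unfolding T.hnorm_sq by (simp add: T.ip_diff_left T.ip_diff_right)

lemma PhiR_dist:
  assumes "valid R" "valid R'"
  shows "L2_normsq \<mu> (\<lambda>g. PhiR R g - PhiR R' g) = (hnorm ipT (XR R - XR R'))\<^sup>2"
  unfolding hnorm_diff_expand L2_normsq_diff_expand[OF PhiR_sq_int[OF assms(1)] PhiR_sq_int[OF assms(2)]]
  by (simp add: PhiR_inner assms)

lemma PhiR_norm:
  assumes "valid R"
  shows "L2_normsq \<mu> (PhiR R) = (hnorm ipT (XR R))\<^sup>2"
  using PhiR_dist[OF assms valid_simps(1)] by (simp add: PhiR_simps XR_simps)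

definition scR :: "complex \<Rightarrow> ('s \<times> 's) list \<Rightarrow> ('s \<times> 's) list" where
  "scR c R = map (\<lambda>p. (fst p, sc c (snd p))) R"

lemma scR_props: "valid (scR c R) = valid R" "XR (scR c R) = scT c (XR R)"
  "PhiR (scR c R) = (\<lambda>g. c * PhiR R g)"
  by (induction R) (auto simp: scR_def PhiR_simps T.sc_zero T.sc_add tens_sc2 wavelet_scale distrib_left)

lemma rep_conv:
  fixes f s :: "nat \<Rightarrow> 's" and n :: nat
  defines "R \<equiv> map (\<lambda>i. (f i, s i)) [0..<n]"
  shows "valid R \<longleftrightarrow> (\<forall>i<n. f i \<in> D)"
    "XR R = (\<Sum>i<n. tens (j (f i)) (s i))"
    "PhiR R = (\<lambda>g. \<Sum>i<n. wavelet ip \<pi> (f i) (s i) g)"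
  unfolding R_def valid_def XR_def PhiR_def
  by (auto simp: sum_list_sum_nth atLeast0LessThan)

lemma rep_conv2:
  "XR R = (\<Sum>i<length R. tens (j (fst (R ! i))) (snd (R ! i)))"
  "PhiR R = (\<lambda>g. \<Sum>i<length R. wavelet ip \<pi> (fst (R ! i)) (snd (R ! i)) g)"
  "valid R \<longleftrightarrow> (\<forall>i<length R. fst (R ! i) \<in> D)"
  unfolding valid_def XR_def PhiR_def
    apply (auto simp: sum_list_sum_nth atLeast0LessThan)
  apply (metis fst_conv in_set_conv_nth)
  done

end

context wp begin

lemma span_dense:
  assumes e: "e > 0"
  shows "\<exists>R. valid R \<and> hnorm ipT (x - XR R) < e"
proof -
  have "\<exists>(n::nat) a s. hnorm ipT (x - (\<Sum>i<n. tens (a i) (s i))) < e / 2"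
    using tens_dense[of "e/2" x] e by simp
  then obtain n :: nat and a s where h: "hnorm ipT (x - (\<Sum>i<n. tens (a i) (s i))) < e / 2"
    by blast
  define \<delta> where "\<delta> i = e / (2 * (real n + 1) * (hnorm ip (s i) + 1))" for i
  have \<delta>pos: "\<delta> i > 0" for i unfolding \<delta>_def using e S.hnorm_nonneg[of "s i"]
    by (intro divide_pos_pos mult_pos_pos) auto
  have "\<forall>i. \<exists>f\<in>D. hnorm ipW (a i - j f) < \<delta> i"
    using j_dense \<delta>pos unfolding hdense_def by blast
  then obtain f where f: "\<And>i. f i \<in> D" "\<And>i. hnorm ipW (a i - j (f i)) < \<delta> i" by metis
  define R where "R = map (\<lambda>i. (f i, s i)) [0..<n]"
  have vR: "valid R" unfolding R_def rep_conv using f by simp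
  have XRR: "XR R = (\<Sum>i<n. tens (j (f i)) (s i))" unfolding R_def rep_conv by simp
  have bound: "hnorm ipW (a i - j (f i)) * hnorm ip (s i) \<le> e / (2 * (real n + 1))" for i
  proof -
    have "hnorm ipW (a i - j (f i)) * hnorm ip (s i) \<le> \<delta> i * hnorm ip (s i)"
      using f(2)[of i] S.hnorm_nonneg[of "s i"] by (simp add: mult_right_mono)
    also have "\<dots> = e / (2 * (real n + 1)) * (hnorm ip (s i) / (hnorm ip (s i) + 1))"
      unfolding \<delta>_def by simp
    also have "\<dots> \<le> e / (2 * (real n + 1)) * 1"
      using e S.hnorm_nonneg[of "s i"] by (intro mult_left_mono) auto
    finally show ?thesis by simp
  qed
  have "hnorm ipT ((\<Sum>i<n. tens (a i) (s i)) - XR R) = hnorm ipT (\<Sum>i<n. tens (a i - j (f i)) (s i))"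
    unfolding XRR by (simp add: tens_diff1 sum_subtractf)
  also have "\<dots> \<le> (\<Sum>i<n. hnorm ipT (tens (a i - j (f i)) (s i)))" by (rule T.hnorm_sum)
  also have "\<dots> \<le> (\<Sum>i<n. e / (2 * (real n + 1)))"
    unfolding hnorm_tens by (intro sum_mono bound)
  also have "\<dots> = real n * e / (2 * (real n + 1))" by simp
  also have "\<dots> < e / 2" using e by (simp add: field_simps)
  finally have "hnorm ipT ((\<Sum>i<n. tens (a i) (s i)) - XR R) < e / 2" .
  then have "hnorm ipT (x - XR R) < e"
    using T.hnorm_triangle_diff[of x "XR R" "\<Sum>i<n. tens (a i) (s i)"] h by simp
  then show ?thesis using vR by blast
qed

definition approx :: "'t \<Rightarrow> nat \<Rightarrow> ('s \<times> 's) list" where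
  "approx x k = (SOME R. valid R \<and> hnorm ipT (x - XR R) < (1/8) ^ k)"

lemma approx: "valid (approx x k)" "hnorm ipT (x - XR (approx x k)) < (1/8) ^ k"
proof -
  have "\<exists>R. valid R \<and> hnorm ipT (x - XR R) < (1/8) ^ k" by (rule span_dense) simp
  from someI_ex[OF this] show "valid (approx x k)" "hnorm ipT (x - XR (approx x k)) < (1/8) ^ k"
    unfolding approx_def by auto
qed

definition Vx :: "'t \<Rightarrow> 'g \<Rightarrow> complex" where
  "Vx x = (\<lambda>g. lim (\<lambda>k. PhiR (approx x k) g))"

lemma Vx_meas: "Vx x \<in> borel_measurable \<mu>"
  unfolding Vx_def by (rule borel_measurable_lim_metric) (rule PhiR_meas[OF approx(1)])

lemma approx_conv: "(\<lambda>k. hnorm ipT (x - XR (approx x k))) \<longlonglongrightarrow> 0"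
proof (rule Lim_null_comparison)
  show "\<forall>\<^sub>F k in sequentially. norm (hnorm ipT (x - XR (approx x k))) \<le> (1/8) ^ k"
    using approx(2) T.hnorm_nonneg by (simp add: less_imp_le)
  show "(\<lambda>k. (1/8::real) ^ k) \<longlonglongrightarrow> 0" by (rule LIMSEQ_realpow_zero) auto
qed

end

context wp begin

lemma approx_step: "hnorm ipT (XR (approx x (Suc k)) - XR (approx x k)) \<le> 2 * (1/8) ^ k"
proof -
  have "hnorm ipT (XR (approx x (Suc k)) - XR (approx x k))
      \<le> hnorm ipT (XR (approx x (Suc k)) - x) + hnorm ipT (x - XR (approx x k))"
    by (rule T.hnorm_triangle_diff)
  also have "\<dots> < (1/8) ^ Suc k + (1/8) ^ k"
    using approx(2)[of x "Suc k"] approx(2)[of x k] T.hnorm_commute[of "XR (approx x (Suc k))" x]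
    by simp
  also have "\<dots> \<le> 2 * (1/8) ^ k" by simp
  finally show ?thesis by simp
qed

lemma approx_AE: "AE g in \<mu>. (\<lambda>k. PhiR (approx x k) g) \<longlonglongrightarrow> Vx x g"
proof -
  define P where "P k = PhiR (approx x k)" for k
  define d where "d k g = P (Suc k) g - P k g" for k g
  have Pm[measurable]: "P k \<in> borel_measurable \<mu>" for k
    unfolding P_def by (rule PhiR_meas[OF approx(1)])
  have dm[measurable]: "d k \<in> borel_measurable \<mu>" for k unfolding d_def by measurable
  have dsq: "sq_int \<mu> (d k)" for k
    unfolding d_def P_def by (intro sq_int_diff PhiR_sq_int approx(1))
  have dnorm: "L2_normsq \<mu> (d k) \<le> 4 * (1/64) ^ k" for k
  proof -
    have "L2_normsq \<mu> (d k) = (hnorm ipT (XR (approx x (Suc k)) - XR (approx x k)))\<^sup>2"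
      unfolding d_def P_def by (rule PhiR_dist[OF approx(1) approx(1)])
    also have "\<dots> \<le> (2 * (1/8) ^ k)\<^sup>2"
      by (rule power_mono[OF approx_step T.hnorm_nonneg])
    also have "\<dots> = 4 * (1/64) ^ k" by (simp add: power_mult_distrib power2_eq_square power_mult[symmetric] flip: power_mult_distrib)
    finally show ?thesis .
  qed
  define u where "u k g = ennreal (4 ^ k * (cmod (d k g))\<^sup>2)" for k g
  have um[measurable]: "u k \<in> borel_measurable \<mu>" for k unfolding u_def by measurable
  have uint: "(\<integral>\<^sup>+ g. u k g \<partial>\<mu>) \<le> ennreal (4 * (1/16) ^ k)" for k
  proof -
    have "(\<integral>\<^sup>+ g. u k g \<partial>\<mu>) = ennreal (\<integral>g. 4 ^ k * (cmod (d k g))\<^sup>2 \<partial>\<mu>)"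
      unfolding u_def using sq_int_int[OF dsq[of k]]
      by (intro nn_integral_eq_integral) auto
    also have "\<dots> = ennreal (4 ^ k * L2_normsq \<mu> (d k))"
      unfolding L2_normsq_def by simp
    also have "\<dots> \<le> ennreal (4 ^ k * (4 * (1/64) ^ k))"
      using dnorm[of k] by (intro ennreal_leI mult_left_mono) auto
    also have "4 ^ k * (4 * (1/64) ^ k) = 4 * (1/16::real) ^ k"
    proof -
      have "(64::real) ^ k = 4 ^ k * 16 ^ k" by (simp flip: power_mult_distrib)
      then show ?thesis by (simp add: power_divide)
    qed
    finally show ?thesis .
  qed
  have "(\<integral>\<^sup>+ g. (\<Sum>k. u k g) \<partial>\<mu>) = (\<Sum>k. \<integral>\<^sup>+ g. u k g \<partial>\<mu>)"
    by (rule nn_integral_suminf) measurable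
  also have "\<dots> \<le> (\<Sum>k. ennreal (4 * (1/16) ^ k))"
    by (intro suminf_le uint summableI)
  also have "\<dots> < top"
  proof -
    have "summable (\<lambda>k. 4 * (1/16::real) ^ k)" by (intro summable_mult summable_geometric) simp
    then have "(\<Sum>k. ennreal (4 * (1/16) ^ k)) \<noteq> top" by (rule ennreal_suminf_neq_top) simp
    then show ?thesis by (rule less_top[THEN iffD1])
  qed
  finally have "(\<integral>\<^sup>+ g. (\<Sum>k. u k g) \<partial>\<mu>) \<noteq> top" by (rule less_imp_neq)
  then have "AE g in \<mu>. (\<Sum>k. u k g) \<noteq> top"
    using nn_integral_PInf_AE[of "\<lambda>g. \<Sum>k. u k g" \<mu>] unfolding infinity_ennreal_def by auto
  then show ?thesis
  proof (rule AE_mp, intro AE_I2 impI)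
    fix g assume fin: "(\<Sum>k. u k g) \<noteq> top"
    define M where "M = enn2real (\<Sum>k. u k g)"
    have M0: "0 \<le> M" unfolding M_def by simp
    have b1: "4 ^ k * (cmod (d k g))\<^sup>2 \<le> M" for k
    proof -
      have "u k g \<le> (\<Sum>k. u k g)"
        using sum_le_suminf[OF summableI, of "{k}" "\<lambda>k. u k g"] by simp
      then have "enn2real (u k g) \<le> M"
        unfolding M_def using fin by (intro enn2real_mono) (auto simp: top.not_eq_extremum)
      then show ?thesis unfolding u_def by simp
    qed
    have b2: "norm (d k g) \<le> sqrt M * (1/2) ^ k" for k
    proof -
      have "(cmod (d k g))\<^sup>2 \<le> M * (1/4) ^ k"
        using b1[of k] by (simp add: field_simps power_divide)
      then have "cmod (d k g) \<le> sqrt (M * (1/4) ^ k)" by (rule real_le_rsqrt)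
      also have "sqrt (M * (1/4) ^ k) = sqrt M * (1/2) ^ k"
        by (simp add: real_sqrt_mult real_sqrt_power real_sqrt_divide)
      finally show ?thesis by simp
    qed
    have "summable (\<lambda>k. d k g)"
    proof (rule summable_comparison_test)
      show "\<exists>N. \<forall>n\<ge>N. norm (d n g) \<le> sqrt M * (1/2) ^ n" using b2 by blast
      show "summable (\<lambda>n. sqrt M * (1/2::real) ^ n)"
        by (intro summable_mult summable_geometric) simp
    qed
    then have "(\<lambda>n. \<Sum>i<n. d i g) \<longlonglongrightarrow> suminf (\<lambda>k. d k g)" by (rule summable_LIMSEQ)
    then have "(\<lambda>n. P 0 g + (\<Sum>i<n. d i g)) \<longlonglongrightarrow> P 0 g + suminf (\<lambda>k. d k g)"
      by (intro tendsto_add tendsto_const)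
    moreover have "P 0 g + (\<Sum>i<n. d i g) = P n g" for n
      unfolding d_def by (subst sum_lessThan_telescope[of "\<lambda>k. P k g"]) simp
    ultimately have conv: "(\<lambda>n. P n g) \<longlonglongrightarrow> P 0 g + suminf (\<lambda>k. d k g)" by simp
    then have "Vx x g = P 0 g + suminf (\<lambda>k. d k g)"
      unfolding Vx_def P_def[symmetric] by (rule limI)
    then show "(\<lambda>k. PhiR (approx x k) g) \<longlonglongrightarrow> Vx x g"
      using conv unfolding P_def by simp
  qed
qed

end

context wp begin

lemma XR_approx_dist: "(\<lambda>k. hnorm ipT (XR (approx x k) - y)) \<longlonglongrightarrow> hnorm ipT (x - y)"
proof -
  have "(\<lambda>k. hnorm ipT (XR (approx x k) - y) - hnorm ipT (x - y)) \<longlonglongrightarrow> 0"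
  proof (rule Lim_null_comparison)
    show "\<forall>\<^sub>F k in sequentially. norm (hnorm ipT (XR (approx x k) - y) - hnorm ipT (x - y))
        \<le> hnorm ipT (x - XR (approx x k))"
    proof (intro always_eventually allI)
      fix k
      have "\<bar>hnorm ipT (XR (approx x k) - y) - hnorm ipT (x - y)\<bar>
          \<le> hnorm ipT ((XR (approx x k) - y) - (x - y))" by (rule T.hnorm_rev)
      also have "\<dots> = hnorm ipT (x - XR (approx x k))"
        using T.hnorm_commute[of "XR (approx x k)" x] by (simp add: algebra_simps)
      finally show "norm (hnorm ipT (XR (approx x k) - y) - hnorm ipT (x - y))
        \<le> hnorm ipT (x - XR (approx x k))" by simp
    qed
    show "(\<lambda>k. hnorm ipT (x - XR (approx x k))) \<longlonglongrightarrow> 0" by (rule approx_conv)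
  qed
  then show ?thesis by (rule LIM_zero_cancel)
qed

lemma fatou_key:
  assumes R: "valid R"
  shows "(\<integral>\<^sup>+ g. ennreal ((cmod (Vx x g - PhiR R g))\<^sup>2) \<partial>\<mu>) \<le> ennreal ((hnorm ipT (x - XR R))\<^sup>2)"
proof -
  define P where "P k = PhiR (approx x k)" for k
  define v where "v k g = ennreal ((cmod (P k g - PhiR R g))\<^sup>2)" for k g
  have Pm[measurable]: "P k \<in> borel_measurable \<mu>" for k
    unfolding P_def by (rule PhiR_meas[OF approx(1)])
  have Rm[measurable]: "PhiR R \<in> borel_measurable \<mu>" by (rule PhiR_meas[OF R])
  have vm[measurable]: "v k \<in> borel_measurable \<mu>" for k unfolding v_def by measurable
  have "AE g in \<mu>. liminf (\<lambda>k. v k g) = ennreal ((cmod (Vx x g - PhiR R g))\<^sup>2)"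
    using approx_AE[of x]
  proof (rule AE_mp, intro AE_I2 impI)
    fix g assume "(\<lambda>k. PhiR (approx x k) g) \<longlonglongrightarrow> Vx x g"
    then have "(\<lambda>k. v k g) \<longlonglongrightarrow> ennreal ((cmod (Vx x g - PhiR R g))\<^sup>2)"
      unfolding v_def P_def by (intro tendsto_ennrealI tendsto_intros)
    then show "liminf (\<lambda>k. v k g) = ennreal ((cmod (Vx x g - PhiR R g))\<^sup>2)"
      by (intro lim_imp_Liminf) simp_all
  qed
  then have "(\<integral>\<^sup>+ g. ennreal ((cmod (Vx x g - PhiR R g))\<^sup>2) \<partial>\<mu>) = (\<integral>\<^sup>+ g. liminf (\<lambda>k. v k g) \<partial>\<mu>)"
    by (intro nn_integral_cong_AE) (auto elim!: AE_mp)
  also have "\<dots> \<le> liminf (\<lambda>k. integral\<^sup>N \<mu> (v k))"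
    by (rule nn_integral_liminf) measurable
  also have "(\<lambda>k. integral\<^sup>N \<mu> (v k)) = (\<lambda>k. ennreal ((hnorm ipT (XR (approx x k) - XR R))\<^sup>2))"
  proof
    fix k
    have sq: "sq_int \<mu> (\<lambda>g. P k g - PhiR R g)"
      unfolding P_def by (intro sq_int_diff PhiR_sq_int approx(1) R)
    have "integral\<^sup>N \<mu> (v k) = ennreal (L2_normsq \<mu> (\<lambda>g. P k g - PhiR R g))"
      unfolding v_def L2_normsq_def using sq_int_int[OF sq]
      by (intro nn_integral_eq_integral) auto
    also have "\<dots> = ennreal ((hnorm ipT (XR (approx x k) - XR R))\<^sup>2)"
      unfolding P_def by (simp add: PhiR_dist approx(1) R)
    finally show "integral\<^sup>N \<mu> (v k) = ennreal ((hnorm ipT (XR (approx x k) - XR R))\<^sup>2)" .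
  qed
  also have "liminf (\<lambda>k. ennreal ((hnorm ipT (XR (approx x k) - XR R))\<^sup>2)) = ennreal ((hnorm ipT (x - XR R))\<^sup>2)"
    by (intro lim_imp_Liminf tendsto_ennrealI tendsto_power XR_approx_dist) simp
  finally show ?thesis .
qed

lemma Vx_diff_sq_int:
  assumes R: "valid R"
  shows "sq_int \<mu> (\<lambda>g. Vx x g - PhiR R g)"
proof -
  have m[measurable]: "(\<lambda>g. Vx x g - PhiR R g) \<in> borel_measurable \<mu>"
    using Vx_meas PhiR_meas[OF R] by measurable
  have "integrable \<mu> (\<lambda>g. (cmod (Vx x g - PhiR R g))\<^sup>2)"
  proof (rule integrableI_bounded)
    have "(\<integral>\<^sup>+ g. ennreal (norm ((cmod (Vx x g - PhiR R g))\<^sup>2)) \<partial>\<mu>) \<le> ennreal ((hnorm ipT (x - XR R))\<^sup>2)"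
      using fatou_key[OF R, of x] by simp
    also have "\<dots> < \<infinity>" by simp
    finally show "(\<integral>\<^sup>+ g. ennreal (norm ((cmod (Vx x g - PhiR R g))\<^sup>2)) \<partial>\<mu>) < \<infinity>" .
  qed measurable
  then show ?thesis unfolding sq_int_def by simp
qed

lemma Vx_sq_int: "sq_int \<mu> (Vx x)"
  using Vx_diff_sq_int[of "[]" x] by (simp add: PhiR_simps)

lemma Vx_dist_normsq:
  assumes R: "valid R"
  shows "L2_normsq \<mu> (\<lambda>g. Vx x g - PhiR R g) \<le> (hnorm ipT (x - XR R))\<^sup>2"
proof -
  have "ennreal (L2_normsq \<mu> (\<lambda>g. Vx x g - PhiR R g)) = (\<integral>\<^sup>+ g. ennreal ((cmod (Vx x g - PhiR R g))\<^sup>2) \<partial>\<mu>)"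
    unfolding L2_normsq_def using sq_int_int[OF Vx_diff_sq_int[OF R]]
    by (intro nn_integral_eq_integral[symmetric]) auto
  also have "\<dots> \<le> ennreal ((hnorm ipT (x - XR R))\<^sup>2)" by (rule fatou_key[OF R])
  finally show ?thesis by simp
qed

lemma Vx_dist:
  assumes R: "valid R"
  shows "L2n \<mu> (\<lambda>g. Vx x g - PhiR R g) \<le> hnorm ipT (x - XR R)"
  unfolding L2n_def using Vx_dist_normsq[OF R] T.hnorm_nonneg
  by (simp add: real_sqrt_le_iff real_le_lsqrt L2_normsq_nonneg)

end

lemma le_eps_zero:
  fixes a C :: real
  assumes "\<And>e. e > 0 \<Longrightarrow> a \<le> C * e"
  shows "a \<le> 0"
proof (rule ccontr)
  assume "\<not> a \<le> 0"
  then have a: "a > 0" by simp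
  define e where "e = a / (\<bar>C\<bar> + 1)"
  have e: "e > 0" unfolding e_def using a by simp
  have "a \<le> C * e" by (rule assms[OF e])
  also have "\<dots> \<le> \<bar>C\<bar> * e" using e by (simp add: mult_right_mono)
  also have "\<dots> < (\<bar>C\<bar> + 1) * e" using e by simp
  also have "\<dots> = a" unfolding e_def by simp
  finally show False by simp
qed

context wp begin

lemma Vsq[intro]: "sq_int \<mu> (Vx x)" by (rule Vx_sq_int)
lemma Psq[intro]: "valid R \<Longrightarrow> sq_int \<mu> (PhiR R)" by (rule PhiR_sq_int)

lemma L2n_PhiR: "valid R \<Longrightarrow> valid R' \<Longrightarrow> L2n \<mu> (\<lambda>g. PhiR R g - PhiR R' g) = hnorm ipT (XR R - XR R')"
  unfolding L2n_def by (simp add: PhiR_dist T.hnorm_nonneg)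

lemma Vx_dist': "valid R \<Longrightarrow> L2n \<mu> (\<lambda>g. PhiR R g - Vx x g) \<le> hnorm ipT (x - XR R)"
  using Vx_dist[of R x] L2n_commute[of \<mu> "PhiR R" "Vx x"] by simp

lemma get_rep: "e > 0 \<Longrightarrow> \<exists>R. valid R \<and> hnorm ipT (x - XR R) < e" by (rule span_dense)

lemma Vx_iso: "L2n \<mu> (\<lambda>g. Vx x g - Vx y g) = hnorm ipT (x - y)"
proof -
  let ?A = "L2n \<mu> (\<lambda>g. Vx x g - Vx y g)"
  let ?h = "hnorm ipT (x - y)"
  have both: "?A - ?h \<le> 4 * e \<and> ?h - ?A \<le> 4 * e" if e: "e > 0" for e
  proof -
    obtain R where R: "valid R" "hnorm ipT (x - XR R) < e" using get_rep[OF e] by blast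
    obtain R' where R': "valid R'" "hnorm ipT (y - XR R') < e" using get_rep[OF e] by blast
    have t1: "?A \<le> L2n \<mu> (\<lambda>g. Vx x g - PhiR R g) + L2n \<mu> (\<lambda>g. PhiR R g - Vx y g)"
      using R by (intro L2n_tri) auto
    have t2: "L2n \<mu> (\<lambda>g. PhiR R g - Vx y g) \<le> L2n \<mu> (\<lambda>g. PhiR R g - PhiR R' g) + L2n \<mu> (\<lambda>g. PhiR R' g - Vx y g)"
      using R R' by (intro L2n_tri) auto
    have t3: "L2n \<mu> (\<lambda>g. PhiR R g - PhiR R' g) \<le> L2n \<mu> (\<lambda>g. PhiR R g - Vx x g) + L2n \<mu> (\<lambda>g. Vx x g - PhiR R' g)"
      using R R' by (intro L2n_tri) auto
    have t4: "L2n \<mu> (\<lambda>g. Vx x g - PhiR R' g) \<le> ?A + L2n \<mu> (\<lambda>g. Vx y g - PhiR R' g)"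
      using R R' by (intro L2n_tri) auto
    have d1: "L2n \<mu> (\<lambda>g. Vx x g - PhiR R g) \<le> hnorm ipT (x - XR R)" by (rule Vx_dist[OF R(1)])
    have d1': "L2n \<mu> (\<lambda>g. PhiR R g - Vx x g) \<le> hnorm ipT (x - XR R)" by (rule Vx_dist'[OF R(1)])
    have d2: "L2n \<mu> (\<lambda>g. Vx y g - PhiR R' g) \<le> hnorm ipT (y - XR R')" by (rule Vx_dist[OF R'(1)])
    have d2': "L2n \<mu> (\<lambda>g. PhiR R' g - Vx y g) \<le> hnorm ipT (y - XR R')" by (rule Vx_dist'[OF R'(1)])
    have p: "L2n \<mu> (\<lambda>g. PhiR R g - PhiR R' g) = hnorm ipT (XR R - XR R')" by (rule L2n_PhiR[OF R(1) R'(1)])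
    have h1: "hnorm ipT (XR R - XR R') \<le> hnorm ipT (XR R - x) + hnorm ipT (x - y) + hnorm ipT (y - XR R')"
      using T.hnorm_triangle_diff[of "XR R" "XR R'" x] T.hnorm_triangle_diff[of x "XR R'" y] by simp
    have h2: "hnorm ipT (x - y) \<le> hnorm ipT (x - XR R) + hnorm ipT (XR R - XR R') + hnorm ipT (XR R' - y)"
      using T.hnorm_triangle_diff[of x y "XR R"] T.hnorm_triangle_diff[of "XR R" y "XR R'"] by simp
    have c1: "hnorm ipT (XR R - x) = hnorm ipT (x - XR R)" by (rule T.hnorm_commute)
    have c2: "hnorm ipT (XR R' - y) = hnorm ipT (y - XR R')" by (rule T.hnorm_commute)
    show ?thesis using t1 t2 t3 t4 d1 d1' d2 d2' p h1 h2 c1 c2 R(2) R'(2) by linarith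
  qed
  have "?A - ?h \<le> 0" by (rule le_eps_zero[of _ 4]) (use both in blast)
  moreover have "?h - ?A \<le> 0" by (rule le_eps_zero[of _ 4]) (use both in blast)
  ultimately show ?thesis by simp
qed

lemma Vx_iso_sq: "L2_normsq \<mu> (\<lambda>g. Vx x g - Vx y g) = (hnorm ipT (x - y))\<^sup>2"
  using Vx_iso[of x y] L2_normsq_nonneg[of \<mu> "\<lambda>g. Vx x g - Vx y g"] unfolding L2n_def
  by (metis real_sqrt_pow2)

lemma L2n_sum_le: "sq_int \<mu> F \<Longrightarrow> sq_int \<mu> G \<Longrightarrow> L2n \<mu> (\<lambda>g. F g + G g) \<le> L2n \<mu> F + L2n \<mu> G"
  unfolding L2n_def by (rule L2_minkowski)

lemma Vx_add: "AE g in \<mu>. Vx (x + y) g = Vx x g + Vx y g"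
proof -
  let ?F = "\<lambda>g. Vx (x + y) g - (Vx x g + Vx y g)"
  have sqF: "sq_int \<mu> ?F" by (intro sq_int_diff sq_int_add Vsq)
  have "L2n \<mu> ?F \<le> 0"
  proof (rule le_eps_zero[of _ 4])
    fix e :: real assume e: "e > 0"
    obtain R where R: "valid R" "hnorm ipT (x - XR R) < e" using get_rep[OF e] by blast
    obtain R' where R': "valid R'" "hnorm ipT (y - XR R') < e" using get_rep[OF e] by blast
    have RR: "valid (R @ R')" using R R' by simp
    have "L2n \<mu> ?F \<le> L2n \<mu> (\<lambda>g. Vx (x + y) g - PhiR (R @ R') g) + L2n \<mu> (\<lambda>g. PhiR (R @ R') g - (Vx x g + Vx y g))"
      using RR by (intro L2n_tri sq_int_add Vsq Psq)
    moreover have "L2n \<mu> (\<lambda>g. Vx (x + y) g - PhiR (R @ R') g) \<le> hnorm ipT (x + y - XR (R @ R'))"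
      by (rule Vx_dist[OF RR])
    moreover have "hnorm ipT (x + y - XR (R @ R')) \<le> hnorm ipT (x - XR R) + hnorm ipT (y - XR R')"
      using T.hnorm_triangle[of "x - XR R" "y - XR R'"] by (simp add: algebra_simps)
    moreover have "L2n \<mu> (\<lambda>g. PhiR (R @ R') g - (Vx x g + Vx y g))
        = L2n \<mu> (\<lambda>g. (PhiR R g - Vx x g) + (PhiR R' g - Vx y g))"
      by (simp add: PhiR_simps algebra_simps)
    moreover have "L2n \<mu> (\<lambda>g. (PhiR R g - Vx x g) + (PhiR R' g - Vx y g))
        \<le> L2n \<mu> (\<lambda>g. PhiR R g - Vx x g) + L2n \<mu> (\<lambda>g. PhiR R' g - Vx y g)"
      using R R' by (intro L2n_sum_le sq_int_diff Vsq Psq)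
    moreover have "L2n \<mu> (\<lambda>g. PhiR R g - Vx x g) \<le> hnorm ipT (x - XR R)" by (rule Vx_dist'[OF R(1)])
    moreover have "L2n \<mu> (\<lambda>g. PhiR R' g - Vx y g) \<le> hnorm ipT (y - XR R')" by (rule Vx_dist'[OF R'(1)])
    ultimately show "L2n \<mu> ?F \<le> 4 * e" using R(2) R'(2) by linarith
  qed
  then have "L2n \<mu> ?F = 0" using L2n_nonneg[of \<mu> ?F] by simp
  then have "AE g in \<mu>. ?F g = 0" using L2n_zero_iff[OF sqF] by simp
  then show ?thesis by (rule AE_mp) auto
qed

lemma Vx_scale: "AE g in \<mu>. Vx (scT c x) g = c * Vx x g"
proof -
  let ?F = "\<lambda>g. Vx (scT c x) g - c * Vx x g"
  have sqF: "sq_int \<mu> ?F" by (intro sq_int_diff sq_int_mult Vsq)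
  have "L2n \<mu> ?F \<le> 0"
  proof (rule le_eps_zero[of _ "2 * cmod c"])
    fix e :: real assume e: "e > 0"
    obtain R where R: "valid R" "hnorm ipT (x - XR R) < e" using get_rep[OF e] by blast
    have cR: "valid (scR c R)" using R by (simp add: scR_props)
    have "L2n \<mu> ?F \<le> L2n \<mu> (\<lambda>g. Vx (scT c x) g - PhiR (scR c R) g) + L2n \<mu> (\<lambda>g. PhiR (scR c R) g - c * Vx x g)"
      using cR by (intro L2n_tri sq_int_mult Vsq Psq)
    moreover have "L2n \<mu> (\<lambda>g. Vx (scT c x) g - PhiR (scR c R) g) \<le> hnorm ipT (scT c x - XR (scR c R))"
      by (rule Vx_dist[OF cR])
    moreover have "hnorm ipT (scT c x - XR (scR c R)) = cmod c * hnorm ipT (x - XR R)"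
      by (simp add: scR_props T.sc_diff[symmetric] T.hnorm_scale)
    moreover have "L2n \<mu> (\<lambda>g. PhiR (scR c R) g - c * Vx x g) = cmod c * L2n \<mu> (\<lambda>g. PhiR R g - Vx x g)"
      using L2n_mult[of \<mu> c "\<lambda>g. PhiR R g - Vx x g"] by (simp add: scR_props right_diff_distrib)
    moreover have "L2n \<mu> (\<lambda>g. PhiR R g - Vx x g) \<le> hnorm ipT (x - XR R)" by (rule Vx_dist'[OF R(1)])
    moreover have "cmod c * hnorm ipT (x - XR R) \<le> cmod c * e"
      using R(2) by (intro mult_left_mono) auto
    moreover have "cmod c * L2n \<mu> (\<lambda>g. PhiR R g - Vx x g) \<le> cmod c * e"
      using R(2) Vx_dist'[OF R(1), of x] by (intro mult_left_mono) auto
    ultimately show "L2n \<mu> ?F \<le> 2 * cmod c * e" by linarith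
  qed
  then have "L2n \<mu> ?F = 0" using L2n_nonneg[of \<mu> ?F] by simp
  then have "AE g in \<mu>. ?F g = 0" using L2n_zero_iff[OF sqF] by simp
  then show ?thesis by (rule AE_mp) auto
qed

lemma Vx_span: "valid R \<Longrightarrow> AE g in \<mu>. Vx (XR R) g = PhiR R g"
proof -
  assume R: "valid R"
  let ?F = "\<lambda>g. Vx (XR R) g - PhiR R g"
  have "L2n \<mu> ?F \<le> 0" using Vx_dist[OF R, of "XR R"] by simp
  then have "L2n \<mu> ?F = 0" using L2n_nonneg[of \<mu> ?F] by simp
  then have "AE g in \<mu>. ?F g = 0" using L2n_zero_iff[OF Vx_diff_sq_int[OF R]] by simp
  then show ?thesis by (rule AE_mp) auto
qed

lemma Vx_unique:
  assumes sq': "\<And>x. sq_int \<mu> (V' x)"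
    and span': "\<And>R. valid R \<Longrightarrow> AE g in \<mu>. V' (XR R) g = PhiR R g"
    and cont': "\<And>x X. (\<lambda>k. hnorm ipT (X k - x)) \<longlonglongrightarrow> 0 \<Longrightarrow>
                 (\<lambda>k. L2_normsq \<mu> (\<lambda>g. V' (X k) g - V' x g)) \<longlonglongrightarrow> 0"
  shows "AE g in \<mu>. V' x g = Vx x g"
proof -
  let ?F = "\<lambda>g. V' x g - Vx x g"
  define X where "X k = XR (approx x k)" for k
  have sqF: "sq_int \<mu> ?F" by (intro sq_int_diff sq' Vsq)
  have "(\<lambda>k. hnorm ipT (X k - x)) \<longlonglongrightarrow> 0"
    unfolding X_def using approx_conv[of x] T.hnorm_commute by simp
  then have "(\<lambda>k. L2_normsq \<mu> (\<lambda>g. V' (X k) g - V' x g)) \<longlonglongrightarrow> 0" by (rule cont')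
  then have "(\<lambda>k. L2n \<mu> (\<lambda>g. V' (X k) g - V' x g)) \<longlonglongrightarrow> 0"
    unfolding L2n_def using tendsto_real_sqrt by fastforce
  then have lim: "(\<lambda>k. L2n \<mu> (\<lambda>g. V' (X k) g - V' x g) + hnorm ipT (x - X k)) \<longlonglongrightarrow> 0"
    using tendsto_add[OF _ approx_conv[of x]] unfolding X_def by fastforce
  have bound: "L2n \<mu> ?F \<le> L2n \<mu> (\<lambda>g. V' (X k) g - V' x g) + hnorm ipT (x - X k)" for k
  proof -
    have R: "valid (approx x k)" by (rule approx(1))
    have "L2n \<mu> ?F \<le> L2n \<mu> (\<lambda>g. V' x g - V' (X k) g) + L2n \<mu> (\<lambda>g. V' (X k) g - Vx x g)"
      by (intro L2n_tri sq' Vsq)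
    moreover have "L2n \<mu> (\<lambda>g. V' (X k) g - Vx x g)
        \<le> L2n \<mu> (\<lambda>g. V' (X k) g - PhiR (approx x k) g) + L2n \<mu> (\<lambda>g. PhiR (approx x k) g - Vx x g)"
      using R by (intro L2n_tri sq' Vsq Psq)
    moreover have "L2n \<mu> (\<lambda>g. V' (X k) g - PhiR (approx x k) g) = 0"
    proof -
      have "AE g in \<mu>. V' (X k) g - PhiR (approx x k) g = 0"
        using span'[OF R] unfolding X_def by (rule AE_mp) auto
      then show ?thesis using L2n_zero_iff[of \<mu> "\<lambda>g. V' (X k) g - PhiR (approx x k) g"] R
        by (simp add: sq_int_diff sq' Psq)
    qed
    moreover have "L2n \<mu> (\<lambda>g. PhiR (approx x k) g - Vx x g) \<le> hnorm ipT (x - X k)"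
      unfolding X_def by (rule Vx_dist'[OF R])
    moreover have "L2n \<mu> (\<lambda>g. V' x g - V' (X k) g) = L2n \<mu> (\<lambda>g. V' (X k) g - V' x g)"
      by (rule L2n_commute)
    ultimately show ?thesis by linarith
  qed
  have "L2n \<mu> ?F \<le> 0"
    by (rule LIMSEQ_le_const[OF lim]) (use bound in blast)
  then have "L2n \<mu> ?F = 0" using L2n_nonneg[of \<mu> ?F] by simp
  then have "AE g in \<mu>. ?F g = 0" using L2n_zero_iff[OF sqF] by simp
  then show ?thesis by (rule AE_mp) auto
qed

end

theorem theorem2:
  fixes \<mu> :: "'g::{topological_group_add, t2_space} measure"
    and sc :: "complex \<Rightarrow> 's::ab_group_add \<Rightarrow> 's" and ip :: "'s \<Rightarrow> 's \<Rightarrow> complex"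
    and \<pi> :: "'g \<Rightarrow> 's \<Rightarrow> 's"
    and D :: "'s set" and K :: "'s \<Rightarrow> 's"
    and scW :: "complex \<Rightarrow> 'w::ab_group_add \<Rightarrow> 'w" and ipW :: "'w \<Rightarrow> 'w \<Rightarrow> complex"
    and j :: "'s \<Rightarrow> 'w"
    and scT :: "complex \<Rightarrow> 't::ab_group_add \<Rightarrow> 't" and ipT :: "'t \<Rightarrow> 't \<Rightarrow> complex"
    and tens :: "'w \<Rightarrow> 's \<Rightarrow> 't"
  assumes "locally_compact_group TYPE('g)"
    and "left_haar \<mu>"
    and "hilbert_space sc ip" and "hseparable ip"
    and "strongly_cont_unitary_rep sc ip \<pi>" and "irreducible_rep sc ip \<pi>"
    and "\<exists>f. f \<noteq> 0 \<and> is_window \<mu> ip \<pi> f"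
    and "duflo_moore \<mu> sc ip \<pi> D K"
    and "window_space sc ip D K scW ipW j"
    and "tensor_product scW ipW sc ip scT ipT tens"
  shows
    \<comment> \<open>the span of the simple tensors f \<otimes> s, f \<in> W \<inter> S, is dense\<close>
    "(\<forall>x e. e > 0 \<longrightarrow>
        (\<exists>n (f :: nat \<Rightarrow> 's) (s :: nat \<Rightarrow> 's). (\<forall>i<n. f i \<in> D) \<and>
           hnorm ipT (x - (\<Sum>i<n. tens (j (f i)) (s i))) < e))
     \<comment> \<open>V is well defined on the span\<close>
     \<and> (\<forall>n (f :: nat \<Rightarrow> 's) (s :: nat \<Rightarrow> 's) m (f' :: nat \<Rightarrow> 's) (s' :: nat \<Rightarrow> 's).
          (\<forall>i<n. f i \<in> D) \<and> (\<forall>i<m. f' i \<in> D) \<and>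
          (\<Sum>i<n. tens (j (f i)) (s i)) = (\<Sum>i<m. tens (j (f' i)) (s' i)) \<longrightarrow>
          (AE g in \<mu>. (\<Sum>i<n. wavelet ip \<pi> (f i) (s i) g) = (\<Sum>i<m. wavelet ip \<pi> (f' i) (s' i) g)))
     \<comment> \<open>V is isometric on the span\<close>
     \<and> (\<forall>n (f :: nat \<Rightarrow> 's) (s :: nat \<Rightarrow> 's). (\<forall>i<n. f i \<in> D) \<longrightarrow>
          sq_int \<mu> (\<lambda>g. \<Sum>i<n. wavelet ip \<pi> (f i) (s i) g) \<and>
          L2_normsq \<mu> (\<lambda>g. \<Sum>i<n. wavelet ip \<pi> (f i) (s i) g)
            = (hnorm ipT (\<Sum>i<n. tens (j (f i)) (s i)))\<^sup>2)
     \<comment> \<open>the continuous extension: a linear isometry W \<otimes> S \<rightarrow> L^2(G) (modulo a.e. equality),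
         unique among L^2-continuous extensions\<close>
     \<and> (\<exists>V :: 't \<Rightarrow> 'g \<Rightarrow> complex.
          (\<forall>x. sq_int \<mu> (V x)) \<and>
          (\<forall>n (f :: nat \<Rightarrow> 's) (s :: nat \<Rightarrow> 's). (\<forall>i<n. f i \<in> D) \<longrightarrow>
             (AE g in \<mu>. V (\<Sum>i<n. tens (j (f i)) (s i)) g = (\<Sum>i<n. wavelet ip \<pi> (f i) (s i) g))) \<and>
          (\<forall>x y. AE g in \<mu>. V (x + y) g = V x g + V y g) \<and>
          (\<forall>c x. AE g in \<mu>. V (scT c x) g = c * V x g) \<and>
          (\<forall>x y. L2_normsq \<mu> (\<lambda>g. V x g - V y g) = (hnorm ipT (x - y))\<^sup>2) \<and>
          (\<forall>V' :: 't \<Rightarrow> 'g \<Rightarrow> complex.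
             (\<forall>x. sq_int \<mu> (V' x)) \<and>
             (\<forall>n (f :: nat \<Rightarrow> 's) (s :: nat \<Rightarrow> 's). (\<forall>i<n. f i \<in> D) \<longrightarrow>
                (AE g in \<mu>. V' (\<Sum>i<n. tens (j (f i)) (s i)) g = (\<Sum>i<n. wavelet ip \<pi> (f i) (s i) g))) \<and>
             (\<forall>x (X :: nat \<Rightarrow> 't). (\<lambda>k. hnorm ipT (X k - x)) \<longlonglongrightarrow> 0 \<longrightarrow>
                (\<lambda>k. L2_normsq \<mu> (\<lambda>g. V' (X k) g - V' x g)) \<longlonglongrightarrow> 0)
             \<longrightarrow> (\<forall>x. AE g in \<mu>. V' x g = V x g)))"
proof -
  note hs = assms(3)[unfolded hilbert_space_def]
  note ws = assms(9)[unfolded window_space_def]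
  note tp = assms(10)[unfolded tensor_product_def]
  note dm = assms(8)[unfolded duflo_moore_def]
  note rp = assms(5)[unfolded strongly_cont_unitary_rep_def]
  have ipS: "ipsp sc ip" unfolding ipsp_def by (rule hs[THEN conjunct1])
  have ipW: "ipsp scW ipW" unfolding ipsp_def by (rule ws[THEN conjunct1, unfolded hilbert_space_def, THEN conjunct1])
  have ipT: "ipsp scT ipT" unfolding ipsp_def by (rule tp[THEN conjunct1, unfolded hilbert_space_def, THEN conjunct1])
  have sets_mu: "sets \<mu> = sets borel" by (rule assms(2)[unfolded left_haar_def, THEN conjunct1])
  have pi_add: "\<And>g x y. \<pi> g (x + y) = \<pi> g x + \<pi> g y" using rp[THEN conjunct1] by blast
  have pi_cont: "\<And>s g0. ((\<lambda>g. hnorm ip (\<pi> g s - \<pi> g0 s)) \<longlongrightarrow> 0) (at g0)" using rp[THEN conjunct2, THEN conjunct2, THEN conjunct2, THEN conjunct2, THEN conjunct2, THEN conjunct2] by blast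
  have D_zero: "0 \<in> D" using dm[THEN conjunct2, THEN conjunct1] unfolding lin_subspace_def by blast
  have K_add: "\<And>x y. x \<in> D \<Longrightarrow> y \<in> D \<Longrightarrow> K (x + y) = K x + K y" using dm[THEN conjunct2, THEN conjunct2, THEN conjunct2, THEN conjunct1] by blast
  have K_inj: "inj_on K D" using dm[THEN conjunct2, THEN conjunct2, THEN conjunct2, THEN conjunct2, THEN conjunct2, THEN conjunct2, THEN conjunct2, THEN conjunct2, THEN conjunct1] by blast
  have orth: "\<And>f1 f2 s1 s2. f1 \<in> D \<Longrightarrow> f2 \<in> D \<Longrightarrow>
        L2_inner \<mu> (wavelet ip \<pi> f1 s1) (wavelet ip \<pi> f2 s2) = ip s1 s2 * ip (K f2) (K f1)"
    using dm[THEN conjunct2, THEN conjunct2, THEN conjunct2, THEN conjunct2, THEN conjunct2, THEN conjunct2, THEN conjunct2, THEN conjunct2, THEN conjunct2, THEN conjunct2] by blast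
  have j_ip: "\<And>f1 f2. f1 \<in> D \<Longrightarrow> f2 \<in> D \<Longrightarrow> ipW (j f1) (j f2) = ip (K f1) (K f2)" using ws[THEN conjunct2, THEN conjunct2, THEN conjunct2, THEN conjunct1] by blast
  have j_dense: "hdense ipW (j ` D)" using ws[THEN conjunct2, THEN conjunct2, THEN conjunct2, THEN conjunct2] by blast
  have tens_add1: "\<And>a b s. tens (a + b) s = tens a s + tens b s" using tp[THEN conjunct2, THEN conjunct1] by blast
  have tens_add2: "\<And>a s t. tens a (s + t) = tens a s + tens a t" using tp[THEN conjunct2, THEN conjunct2, THEN conjunct2, THEN conjunct1] by blast
  have tens_sc2: "\<And>a c s. tens a (sc c s) = scT c (tens a s)" using tp[THEN conjunct2, THEN conjunct2, THEN conjunct2, THEN conjunct2, THEN conjunct1] by blast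
  have tens_ip: "\<And>a b s t. ipT (tens a s) (tens b t) = cnj (ipW a b) * ip s t" using tp[THEN conjunct2, THEN conjunct2, THEN conjunct2, THEN conjunct2, THEN conjunct2, THEN conjunct1] by blast
  have tens_dense: "\<And>x e. e > 0 \<Longrightarrow> \<exists>(n::nat) a s. hnorm ipT (x - (\<Sum>i<n. tens (a i) (s i))) < e"
    using tp[THEN conjunct2, THEN conjunct2, THEN conjunct2, THEN conjunct2, THEN conjunct2, THEN conjunct2] by blast
  interpret wp sc ip scW ipW scT ipT \<mu> \<pi> D K j tens
    by (rule wp.intro[OF ipS ipW ipT], unfold_locales)
      (fact sets_mu pi_add pi_cont D_zero K_add K_inj orth j_ip j_dense tens_add1 tens_add2 tens_sc2
        tens_ip tens_dense)+
  have P1: "\<forall>x e. e > 0 \<longrightarrow>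
        (\<exists>n (f :: nat \<Rightarrow> 's) (s :: nat \<Rightarrow> 's). (\<forall>i<n. f i \<in> D) \<and>
           hnorm ipT (x - (\<Sum>i<n. tens (j (f i)) (s i))) < e)"
  proof (intro allI impI)
    fix x and e :: real assume e: "e > 0"
    obtain R where R: "valid R" "hnorm ipT (x - XR R) < e" using span_dense[OF e] by blast
    show "\<exists>n (f :: nat \<Rightarrow> 's) (s :: nat \<Rightarrow> 's). (\<forall>i<n. f i \<in> D) \<and>
           hnorm ipT (x - (\<Sum>i<n. tens (j (f i)) (s i))) < e"
      using R unfolding rep_conv2
      by (intro exI[of _ "length R"] exI[of _ "\<lambda>i. fst (R ! i)"] exI[of _ "\<lambda>i. snd (R ! i)"]) simp
  qed
  have P2: "\<forall>n (f :: nat \<Rightarrow> 's) (s :: nat \<Rightarrow> 's) m (f' :: nat \<Rightarrow> 's) (s' :: nat \<Rightarrow> 's).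
          (\<forall>i<n. f i \<in> D) \<and> (\<forall>i<m. f' i \<in> D) \<and>
          (\<Sum>i<n. tens (j (f i)) (s i)) = (\<Sum>i<m. tens (j (f' i)) (s' i)) \<longrightarrow>
          (AE g in \<mu>. (\<Sum>i<n. wavelet ip \<pi> (f i) (s i) g) = (\<Sum>i<m. wavelet ip \<pi> (f' i) (s' i) g))"
  proof (intro allI impI, elim conjE)
    fix n m :: nat and f s f' s' :: "nat \<Rightarrow> 's"
    assume a: "\<forall>i<n. f i \<in> D" "\<forall>i<m. f' i \<in> D"
      "(\<Sum>i<n. tens (j (f i)) (s i)) = (\<Sum>i<m. tens (j (f' i)) (s' i))"
    define R where "R = map (\<lambda>i. (f i, s i)) [0..<n]"
    define R' where "R' = map (\<lambda>i. (f' i, s' i)) [0..<m]"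
    have v: "valid R" "valid R'" unfolding R_def R'_def rep_conv using a by auto
    have x: "XR R = XR R'" unfolding R_def R'_def rep_conv using a by simp
    have "L2_normsq \<mu> (\<lambda>g. PhiR R g - PhiR R' g) = 0" using PhiR_dist[OF v] x by simp
    then have "AE g in \<mu>. PhiR R g - PhiR R' g = 0"
      using L2_normsq_zero_iff[OF sq_int_diff[OF PhiR_sq_int[OF v(1)] PhiR_sq_int[OF v(2)]]] by simp
    then show "AE g in \<mu>. (\<Sum>i<n. wavelet ip \<pi> (f i) (s i) g) = (\<Sum>i<m. wavelet ip \<pi> (f' i) (s' i) g)"
      unfolding R_def R'_def rep_conv by (rule AE_mp) auto
  qed
  have P3: "\<forall>n (f :: nat \<Rightarrow> 's) (s :: nat \<Rightarrow> 's). (\<forall>i<n. f i \<in> D) \<longrightarrow>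
          sq_int \<mu> (\<lambda>g. \<Sum>i<n. wavelet ip \<pi> (f i) (s i) g) \<and>
          L2_normsq \<mu> (\<lambda>g. \<Sum>i<n. wavelet ip \<pi> (f i) (s i) g)
            = (hnorm ipT (\<Sum>i<n. tens (j (f i)) (s i)))\<^sup>2"
  proof (intro allI impI)
    fix n :: nat and f s :: "nat \<Rightarrow> 's"
    assume a: "\<forall>i<n. f i \<in> D"
    define R where "R = map (\<lambda>i. (f i, s i)) [0..<n]"
    have v: "valid R" unfolding R_def rep_conv using a by auto
    show "sq_int \<mu> (\<lambda>g. \<Sum>i<n. wavelet ip \<pi> (f i) (s i) g) \<and>
          L2_normsq \<mu> (\<lambda>g. \<Sum>i<n. wavelet ip \<pi> (f i) (s i) g)
            = (hnorm ipT (\<Sum>i<n. tens (j (f i)) (s i)))\<^sup>2"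
      using PhiR_sq_int[OF v] PhiR_norm[OF v] unfolding R_def rep_conv by simp
  qed
  have P4: "\<exists>V :: 't \<Rightarrow> 'g \<Rightarrow> complex.
          (\<forall>x. sq_int \<mu> (V x)) \<and>
          (\<forall>n (f :: nat \<Rightarrow> 's) (s :: nat \<Rightarrow> 's). (\<forall>i<n. f i \<in> D) \<longrightarrow>
             (AE g in \<mu>. V (\<Sum>i<n. tens (j (f i)) (s i)) g = (\<Sum>i<n. wavelet ip \<pi> (f i) (s i) g))) \<and>
          (\<forall>x y. AE g in \<mu>. V (x + y) g = V x g + V y g) \<and>
          (\<forall>c x. AE g in \<mu>. V (scT c x) g = c * V x g) \<and>
          (\<forall>x y. L2_normsq \<mu> (\<lambda>g. V x g - V y g) = (hnorm ipT (x - y))\<^sup>2) \<and>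
          (\<forall>V' :: 't \<Rightarrow> 'g \<Rightarrow> complex.
             (\<forall>x. sq_int \<mu> (V' x)) \<and>
             (\<forall>n (f :: nat \<Rightarrow> 's) (s :: nat \<Rightarrow> 's). (\<forall>i<n. f i \<in> D) \<longrightarrow>
                (AE g in \<mu>. V' (\<Sum>i<n. tens (j (f i)) (s i)) g = (\<Sum>i<n. wavelet ip \<pi> (f i) (s i) g))) \<and>
             (\<forall>x (X :: nat \<Rightarrow> 't). (\<lambda>k. hnorm ipT (X k - x)) \<longlonglongrightarrow> 0 \<longrightarrow>
                (\<lambda>k. L2_normsq \<mu> (\<lambda>g. V' (X k) g - V' x g)) \<longlonglongrightarrow> 0)
             \<longrightarrow> (\<forall>x. AE g in \<mu>. V' x g = V x g))"
  proof (intro exI[of _ Vx] conjI allI impI)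
    show "sq_int \<mu> (Vx x)" for x by (rule Vx_sq_int)
    show "AE g in \<mu>. Vx (\<Sum>i<n. tens (j (f i)) (s i)) g = (\<Sum>i<n. wavelet ip \<pi> (f i) (s i) g)"
      if a: "\<forall>i<n. f i \<in> D" for n :: nat and f s :: "nat \<Rightarrow> 's"
    proof -
      define R where "R = map (\<lambda>i. (f i, s i)) [0..<n]"
      have v: "valid R" unfolding R_def rep_conv using a by auto
      show ?thesis using Vx_span[OF v] unfolding R_def rep_conv by simp
    qed
    show "AE g in \<mu>. Vx (x + y) g = Vx x g + Vx y g" for x y by (rule Vx_add)
    show "AE g in \<mu>. Vx (scT c x) g = c * Vx x g" for c x by (rule Vx_scale)
    show "L2_normsq \<mu> (\<lambda>g. Vx x g - Vx y g) = (hnorm ipT (x - y))\<^sup>2" for x y by (rule Vx_iso_sq)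
    fix V' :: "'t \<Rightarrow> 'g \<Rightarrow> complex" and x
    assume h: "(\<forall>x. sq_int \<mu> (V' x)) \<and>
             (\<forall>n (f :: nat \<Rightarrow> 's) (s :: nat \<Rightarrow> 's). (\<forall>i<n. f i \<in> D) \<longrightarrow>
                (AE g in \<mu>. V' (\<Sum>i<n. tens (j (f i)) (s i)) g = (\<Sum>i<n. wavelet ip \<pi> (f i) (s i) g))) \<and>
             (\<forall>x (X :: nat \<Rightarrow> 't). (\<lambda>k. hnorm ipT (X k - x)) \<longlonglongrightarrow> 0 \<longrightarrow>
                (\<lambda>k. L2_normsq \<mu> (\<lambda>g. V' (X k) g - V' x g)) \<longlonglongrightarrow> 0)"
    show "AE g in \<mu>. V' x g = Vx x g"
    proof (rule Vx_unique)
      show "\<And>x. sq_int \<mu> (V' x)" using h by blast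
      show "\<And>x X. (\<lambda>k. hnorm ipT (X k - x)) \<longlonglongrightarrow> 0 \<Longrightarrow>
                 (\<lambda>k. L2_normsq \<mu> (\<lambda>g. V' (X k) g - V' x g)) \<longlonglongrightarrow> 0" using h by blast
      fix R assume R: "valid R"
      have "AE g in \<mu>. V' (\<Sum>i<length R. tens (j (fst (R ! i))) (snd (R ! i))) g
          = (\<Sum>i<length R. wavelet ip \<pi> (fst (R ! i)) (snd (R ! i)) g)"
        using h[THEN conjunct2, THEN conjunct1, rule_format, of "length R" "\<lambda>i. fst (R ! i)" "\<lambda>i. snd (R ! i)"] R
        unfolding rep_conv2 by blast
      then show "AE g in \<mu>. V' (XR R) g = PhiR R g" unfolding rep_conv2 by simp
    qed
  qed
  show ?thesis using P1 P2 P3 P4 by blast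
qed

end
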